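(* Let $X,Y$ be compact smooth manifolds, $\mu\in\mathcal{P}(X)$, $\nu\in\mathcal{P}(Y)$ normalized volume forms, and $c\in C(X\times Y)$ a continuous cost function satisfying (A1) and (A2) off the closed set $\mathrm{sing}(c)$ where $c$ fails to be smooth. Let $u_0$ be a $c$-convex function and $u^{(k)}_m:=(S^{(k)})^m(u_0)$. For $t\ge0$ let $\mathcal{L}_t$ be the set of all $w\in C(X)$ that are uniform limits of sequences $u^{(k_j)}_{m_j}$ with $k_j\to\infty$ and $m_j/k_j\to t$, and define $u_t(x):=\sup_{w\in\mathcal{L}_t}w(x)$. Then for each $t\ge0$ the function $u_t$ is $c$-convex (in particular continuous), and there is a constant $C$ such that $\sup_{X\times[0,\infty)}|u_t(x)|\le C$.
   Context: (A1): for $(x,y)\notin\mathrm{sing}(c)$ the map $y\mapsto\partial_xc(x,y)$ is injective; (A2): $\det(\partial_{x_i}\partial_{y_j}c)\ne0$ off $\mathrm{sing}(c)$. $c$-transform $u^c(y)=\sup_x(-c(x,y)-u(x))$, $v^c(x)=\sup_y(-c(x,y)-v(y))$; $u$ is $c$-convex if $(u^c)^c=u$. Scaled operators (with $\mu^{(k)}=\mu$, $\nu^{(k)}=\nu$): $v^{(k)}[u](y)=k^{-1}\log\int_Xe^{-kc(x,y)-ku(x)}d\mu(x)$, $S^{(k)}(u)(x)=k^{-1}\log\int_Ye^{-kc(x,y)-kv^{(k)}[u](y)}d\nu(y)$. *)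

theory Defs
  imports "HOL-Analysis.Analysis" "HOL-Probability.Probability"
begin

fun pder :: "'a::euclidean_space list \<Rightarrow> ('a \<Rightarrow> 'b::real_normed_vector) \<Rightarrow> 'a \<Rightarrow> 'b" where
  "pder [] f = f"
| "pder (d # ds) f = (\<lambda>x. vector_derivative (\<lambda>t. pder ds f (x + t *\<^sub>R d)) (at 0))"

definition cinf_on :: "'a::euclidean_space set \<Rightarrow> ('a \<Rightarrow> 'b::real_normed_vector) \<Rightarrow> bool" where
  "cinf_on U f \<longleftrightarrow>
     (\<forall>ds. set ds \<subseteq> Basis \<longrightarrow>
        continuous_on U (pder ds f) \<and>
        (\<forall>d\<in>Basis. \<forall>x\<in>U.
           ((\<lambda>t. pder ds f (x + t *\<^sub>R d)) has_vector_derivative pder (d # ds) f x) (at 0)))"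

text \<open>A local parametrization (inverse chart) of X by an open subset U of real^'n:
 a smooth immersion that is a homeomorphism onto an open subset of X.\<close>
definition chart :: "'a::euclidean_space set \<Rightarrow> (real^'n \<Rightarrow> 'a) \<Rightarrow> (real^'n) set \<Rightarrow> bool" where
  "chart X \<phi> U \<longleftrightarrow> open U \<and> cinf_on U \<phi> \<and>
     (\<forall>a\<in>U. \<forall>v::real^'n. (\<Sum>i\<in>UNIV. v $ i *\<^sub>R pder [axis i 1] \<phi> a) = 0 \<longrightarrow> v = 0) \<and>
     inj_on \<phi> U \<and> \<phi> ` U \<subseteq> X \<and> openin (top_of_set X) (\<phi> ` U) \<and>
     continuous_on (\<phi> ` U) (inv_into U \<phi>)"

text \<open>X is a smooth submanifold of dimension CARD('n) (without boundary).\<close>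
definition smooth_manifold :: "'n::finite itself \<Rightarrow> 'a::euclidean_space set \<Rightarrow> bool" where
  "smooth_manifold _ X \<longleftrightarrow>
     (\<forall>x\<in>X. \<exists>(\<phi>::real^'n \<Rightarrow> 'a) U. chart X \<phi> U \<and> x \<in> \<phi> ` U)"

text \<open>mu is a (smooth, positive) volume form on X: Borel measure on X whose
 pull-back by every chart has a smooth positive density w.r.t. Lebesgue measure.\<close>
definition volume_form :: "'n::finite itself \<Rightarrow> 'a::euclidean_space set \<Rightarrow> 'a measure \<Rightarrow> bool" where
  "volume_form _ X \<mu> \<longleftrightarrow> sets \<mu> = sets (restrict_space borel X) \<and>
     (\<forall>(\<phi>::real^'n \<Rightarrow> 'a) U. chart X \<phi> U \<longrightarrow>
        (\<exists>\<rho>::real^'n \<Rightarrow> real. cinf_on U \<rho> \<and> (\<forall>a\<in>U. \<rho> a > 0) \<and>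
           (\<forall>B\<in>sets lborel. B \<subseteq> U \<longrightarrow>
               emeasure \<mu> (\<phi> ` B) = set_nn_integral lborel B (\<lambda>a. ennreal (\<rho> a)))))"

text \<open>The singular set sing(c): points of X x Y near which c is not smooth
 (smoothness read in charts).\<close>
definition sing :: "'n::finite itself \<Rightarrow> 'a::euclidean_space set \<Rightarrow> 'b::euclidean_space set
     \<Rightarrow> ('a \<times> 'b \<Rightarrow> real) \<Rightarrow> ('a \<times> 'b) set" where
  "sing _ X Y c = {(x, y) \<in> X \<times> Y. \<not> (\<exists>(\<phi>::real^'n \<Rightarrow> 'a) U (\<psi>::real^'n \<Rightarrow> 'b) V a b W.
       chart X \<phi> U \<and> chart Y \<psi> V \<and> a \<in> U \<and> b \<in> V \<and> \<phi> a = x \<and> \<psi> b = y \<and>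
       open W \<and> (a, b) \<in> W \<and> W \<subseteq> U \<times> V \<and>
       cinf_on W (\<lambda>p. c (\<phi> (fst p), \<psi> (snd p))))}"

definition grad_x :: "(real^'n \<Rightarrow> 'a) \<Rightarrow> ('a \<times> 'b \<Rightarrow> real) \<Rightarrow> 'b \<Rightarrow> real^'n \<Rightarrow> real^'n" where
  "grad_x \<phi> c y a = (\<chi> i. pder [axis i 1] (\<lambda>a'. c (\<phi> a', y)) a)"

definition mixed_hess :: "(real^'n \<Rightarrow> 'a) \<Rightarrow> (real^'n \<Rightarrow> 'b) \<Rightarrow> ('a \<times> 'b \<Rightarrow> real)
     \<Rightarrow> real^'n \<Rightarrow> real^'n \<Rightarrow> real^'n^'n" where
  "mixed_hess \<phi> \<psi> c a b = (\<chi> i. \<chi> j. pder [(0, axis j 1), (axis i 1, 0)]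
       (\<lambda>p::(real^'n) \<times> (real^'n). c (\<phi> (fst p), \<psi> (snd p))) (a, b))"

definition cond_A1 :: "'n::finite itself \<Rightarrow> 'a::euclidean_space set \<Rightarrow> 'b::euclidean_space set
     \<Rightarrow> ('a \<times> 'b \<Rightarrow> real) \<Rightarrow> bool" where
  "cond_A1 T X Y c \<longleftrightarrow>
     (\<forall>(\<phi>::real^'n \<Rightarrow> 'a) U. chart X \<phi> U \<longrightarrow>
       (\<forall>a\<in>U. \<forall>y1\<in>Y. \<forall>y2\<in>Y.
          (\<phi> a, y1) \<notin> sing T X Y c \<longrightarrow> (\<phi> a, y2) \<notin> sing T X Y c \<longrightarrow>
          grad_x \<phi> c y1 a = grad_x \<phi> c y2 a \<longrightarrow> y1 = y2))"

definition cond_A2 :: "'n::finite itself \<Rightarrow> 'a::euclidean_space set \<Rightarrow> 'b::euclidean_space set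
     \<Rightarrow> ('a \<times> 'b \<Rightarrow> real) \<Rightarrow> bool" where
  "cond_A2 T X Y c \<longleftrightarrow>
     (\<forall>(\<phi>::real^'n \<Rightarrow> 'a) U (\<psi>::real^'n \<Rightarrow> 'b) V. chart X \<phi> U \<longrightarrow> chart Y \<psi> V \<longrightarrow>
       (\<forall>a\<in>U. \<forall>b\<in>V. (\<phi> a, \<psi> b) \<notin> sing T X Y c \<longrightarrow> det (mixed_hess \<phi> \<psi> c a b) \<noteq> 0))"

definition ctrans :: "'a set \<Rightarrow> ('a \<times> 'b \<Rightarrow> real) \<Rightarrow> ('a \<Rightarrow> real) \<Rightarrow> 'b \<Rightarrow> real" where
  "ctrans X c u y = (SUP x\<in>X. - c (x, y) - u x)"

definition ctrans' :: "'b set \<Rightarrow> ('a \<times> 'b \<Rightarrow> real) \<Rightarrow> ('b \<Rightarrow> real) \<Rightarrow> 'a \<Rightarrow> real" where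
  "ctrans' Y c v x = (SUP y\<in>Y. - c (x, y) - v y)"

text \<open>u is c-convex iff (u^c)^c = u on X (bdd_below makes the real suprema
 genuine; it is implied by finiteness of u^c).\<close>
definition c_convex :: "'a set \<Rightarrow> 'b set \<Rightarrow> ('a \<times> 'b \<Rightarrow> real) \<Rightarrow> ('a \<Rightarrow> real) \<Rightarrow> bool" where
  "c_convex X Y c u \<longleftrightarrow> bdd_below (u ` X) \<and> (\<forall>x\<in>X. ctrans' Y c (ctrans X c u) x = u x)"

definition vk :: "real \<Rightarrow> ('a \<times> 'b \<Rightarrow> real) \<Rightarrow> 'a measure \<Rightarrow> ('a \<Rightarrow> real) \<Rightarrow> 'b \<Rightarrow> real" where
  "vk k c \<mu> u y = (1 / k) * ln (integral\<^sup>L \<mu> (\<lambda>x. exp (- k * c (x, y) - k * u x)))"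

definition Sk :: "real \<Rightarrow> ('a \<times> 'b \<Rightarrow> real) \<Rightarrow> 'a measure \<Rightarrow> 'b measure \<Rightarrow> ('a \<Rightarrow> real) \<Rightarrow> 'a \<Rightarrow> real" where
  "Sk k c \<mu> \<nu> u x = (1 / k) * ln (integral\<^sup>L \<nu> (\<lambda>y. exp (- k * c (x, y) - k * vk k c \<mu> u y)))"

definition Lset :: "'a::topological_space set \<Rightarrow> ('a \<times> 'b \<Rightarrow> real) \<Rightarrow> 'a measure \<Rightarrow> 'b measure \<Rightarrow> ('a \<Rightarrow> real)
     \<Rightarrow> real \<Rightarrow> ('a \<Rightarrow> real) set" where
  "Lset X c \<mu> \<nu> u0 t = {w. continuous_on X w \<and>
     (\<exists>(k::nat \<Rightarrow> real) (m::nat \<Rightarrow> nat). filterlim k at_top sequentially \<and>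
        (\<lambda>j. real (m j) / k j) \<longlonglongrightarrow> t \<and>
        uniform_limit X (\<lambda>j. (Sk (k j) c \<mu> \<nu> ^^ m j) u0) w sequentially)}"

definition u_lim :: "'a::topological_space set \<Rightarrow> ('a \<times> 'b \<Rightarrow> real) \<Rightarrow> 'a measure \<Rightarrow> 'b measure \<Rightarrow> ('a \<Rightarrow> real)
     \<Rightarrow> real \<Rightarrow> 'a \<Rightarrow> real" where
  "u_lim X c \<mu> \<nu> u0 t x = (SUP w\<in>Lset X c \<mu> \<nu> u0 t. w x)"

end

theory Submission
  imports Defs "HOL-Complex_Analysis.Great_Picard"
begin

definition LSE :: "real \<Rightarrow> 'a measure \<Rightarrow> ('a \<Rightarrow> real) \<Rightarrow> real" where
  "LSE k M f = (1/k) * ln (\<integral>x. exp (k * f x) \<partial>M)"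

context prob_space
begin

lemma bnd_integrable:
  assumes "(f::'a\<Rightarrow>real) \<in> borel_measurable M" "\<And>x. x \<in> space M \<Longrightarrow> \<bar>f x\<bar> \<le> B"
  shows "integrable M f"
  by (rule integrable_const_bound[where B=B and f=f]) (use assms in auto)

lemma exp_integrable:
  assumes "(f::'a\<Rightarrow>real) \<in> borel_measurable M" "\<And>x. x \<in> space M \<Longrightarrow> \<bar>f x\<bar> \<le> B"
  shows "integrable M (\<lambda>x. exp (k * f x))"
proof (rule integrable_const_bound[where B="exp (\<bar>k\<bar> * B)" and f="\<lambda>x. exp (k * f x)"])
  show "AE x in M. norm (exp (k * f x)) \<le> exp (\<bar>k\<bar> * B)"
  proof (rule AE_I2)
    fix x assume x: "x \<in> space M"
    have "k * f x \<le> \<bar>k\<bar> * B"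
      proof -
      have "k * f x \<le> \<bar>k * f x\<bar>" by simp
      also have "\<dots> = \<bar>k\<bar> * \<bar>f x\<bar>" by (simp add: abs_mult)
      also have "\<dots> \<le> \<bar>k\<bar> * B" using assms(2)[OF x] by (simp add: mult_left_mono)
      finally show ?thesis .
    qed
    then show "norm (exp (k * f x)) \<le> exp (\<bar>k\<bar> * B)" by simp
  qed
qed (use assms in auto)

lemma exp_integral_lower:
  assumes "(f::'a\<Rightarrow>real) \<in> borel_measurable M" "\<And>x. x \<in> space M \<Longrightarrow> \<bar>f x\<bar> \<le> B"
  shows "exp (- (\<bar>k\<bar> * B)) \<le> (\<integral>x. exp (k * f x) \<partial>M)"
proof -
  have "(\<integral>x. exp (- (\<bar>k\<bar> * B)) \<partial>M) \<le> (\<integral>x. exp (k * f x) \<partial>M)"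
  proof (rule Bochner_Integration.integral_mono)
    show "integrable M (\<lambda>x. exp (k * f x))" by (rule exp_integrable[OF assms])
    fix x assume x: "x \<in> space M"
    have "- (\<bar>k\<bar> * B) \<le> k * f x"
      proof -
      have "\<bar>k\<bar> * \<bar>f x\<bar> \<le> \<bar>k\<bar> * B" using assms(2)[OF x] by (simp add: mult_left_mono)
      moreover have "- (k * f x) \<le> \<bar>k * f x\<bar>" by simp
      ultimately show ?thesis by (simp add: abs_mult)
    qed
    then show "exp (- (\<bar>k\<bar> * B)) \<le> exp (k * f x)" by simp
  qed simp
  then show ?thesis by (simp add: prob_space)
qed

lemma exp_integral_pos:
  assumes "(f::'a\<Rightarrow>real) \<in> borel_measurable M" "\<And>x. x \<in> space M \<Longrightarrow> \<bar>f x\<bar> \<le> B"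
  shows "0 < (\<integral>x. exp (k * f x) \<partial>M)"
  using exp_integral_lower[OF assms, of k] by (meson exp_gt_zero less_le_trans)

lemma LSE_const: "k \<noteq> 0 \<Longrightarrow> LSE k M (\<lambda>_. a) = a"
  by (simp add: LSE_def prob_space)

lemma LSE_mono_shift:
  assumes k: "k > 0"
    and f: "(f::'a\<Rightarrow>real) \<in> borel_measurable M" "\<And>x. x \<in> space M \<Longrightarrow> \<bar>f x\<bar> \<le> B"
    and g: "(g::'a\<Rightarrow>real) \<in> borel_measurable M" "\<And>x. x \<in> space M \<Longrightarrow> \<bar>g x\<bar> \<le> B'"
    and le: "\<And>x. x \<in> space M \<Longrightarrow> f x \<le> g x + e"
  shows "LSE k M f \<le> LSE k M g + e"
proof -
  have "(\<integral>x. exp (k * f x) \<partial>M) \<le> (\<integral>x. exp (k * e) * exp (k * g x) \<partial>M)"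
  proof (rule Bochner_Integration.integral_mono)
    show "integrable M (\<lambda>x. exp (k * f x))" by (rule exp_integrable[OF f])
    show "integrable M (\<lambda>x. exp (k * e) * exp (k * g x))"
      using exp_integrable[OF g] by simp
    fix x assume x: "x \<in> space M"
    have "k * f x \<le> k * e + k * g x" using le[OF x] k
      by (metis add.commute distrib_left mult_le_cancel_left_pos)
    then show "exp (k * f x) \<le> exp (k * e) * exp (k * g x)"
      by (simp add: exp_add[symmetric])
  qed
  also have "\<dots> = exp (k * e) * (\<integral>x. exp (k * g x) \<partial>M)" by simp
  finally have *: "(\<integral>x. exp (k * f x) \<partial>M) \<le> exp (k * e) * (\<integral>x. exp (k * g x) \<partial>M)" .
  have p1: "0 < (\<integral>x. exp (k * f x) \<partial>M)" by (rule exp_integral_pos[OF f])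
  have p2: "0 < (\<integral>x. exp (k * g x) \<partial>M)" by (rule exp_integral_pos[OF g])
  have "ln (\<integral>x. exp (k * f x) \<partial>M) \<le> ln (exp (k * e) * (\<integral>x. exp (k * g x) \<partial>M))"
    using * p1 p2 by simp
  also have "\<dots> = k * e + ln (\<integral>x. exp (k * g x) \<partial>M)"
    using p2 by (simp add: ln_mult)
  finally have "ln (\<integral>x. exp (k * f x) \<partial>M) \<le> k * e + ln (\<integral>x. exp (k * g x) \<partial>M)" .
  then have "(1/k) * ln (\<integral>x. exp (k * f x) \<partial>M) \<le> (1/k) * (k * e + ln (\<integral>x. exp (k * g x) \<partial>M))"
    using k by (simp add: divide_right_mono)
  also have "\<dots> = (1/k) * ln (\<integral>x. exp (k * g x) \<partial>M) + e"
    using k by (simp add: field_simps)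
  finally show ?thesis unfolding LSE_def .
qed

lemma LSE_upper:
  assumes k: "k > 0"
    and f: "(f::'a\<Rightarrow>real) \<in> borel_measurable M" "\<And>x. x \<in> space M \<Longrightarrow> \<bar>f x\<bar> \<le> B"
    and le: "\<And>x. x \<in> space M \<Longrightarrow> f x \<le> a"
  shows "LSE k M f \<le> a"
  using LSE_mono_shift[OF k f, of "\<lambda>_. a" "\<bar>a\<bar>" 0] le k by (simp add: LSE_const)

lemma LSE_lower_const:
  assumes k: "k > 0"
    and f: "(f::'a\<Rightarrow>real) \<in> borel_measurable M" "\<And>x. x \<in> space M \<Longrightarrow> \<bar>f x\<bar> \<le> B"
    and le: "\<And>x. x \<in> space M \<Longrightarrow> a \<le> f x"
  shows "a \<le> LSE k M f"
  using LSE_mono_shift[OF k _ _ f, of "\<lambda>_. a" "\<bar>a\<bar>" 0] le k by (simp add: LSE_const)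

lemma LSE_lower:
  assumes k: "k > 0"
    and f: "(f::'a\<Rightarrow>real) \<in> borel_measurable M" "\<And>x. x \<in> space M \<Longrightarrow> \<bar>f x\<bar> \<le> B"
    and A: "A \<in> sets M" and p: "0 < p" "p \<le> measure M A"
    and le: "\<And>x. x \<in> A \<Longrightarrow> a \<le> f x"
  shows "a + ln p / k \<le> LSE k M f"
proof -
  have "(\<integral>x. indicator A x * exp (k * a) \<partial>M) \<le> (\<integral>x. exp (k * f x) \<partial>M)"
  proof (rule Bochner_Integration.integral_mono)
    show "integrable M (\<lambda>x. exp (k * f x))" by (rule exp_integrable[OF f])
    show "integrable M (\<lambda>x. indicator A x * exp (k * a))"
    proof (rule integrable_const_bound[where B="exp (k * a)"])
      show "AE x in M. norm (indicator A x * exp (k * a)) \<le> exp (k * a)"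
        by (auto simp: indicator_def)
      show "(\<lambda>x. indicator A x * exp (k * a)) \<in> borel_measurable M"
        using A by measurable
    qed
    fix x assume x: "x \<in> space M"
    show "indicator A x * exp (k * a) \<le> exp (k * f x)"
      using le[of x] k by (auto simp: indicator_def)
  qed
  moreover have "(\<integral>x. indicator A x * exp (k * a) \<partial>M) = measure M A * exp (k * a)"
    using A by simp
  moreover have "p * exp (k * a) \<le> measure M A * exp (k * a)"
    using p by (intro mult_right_mono) auto
  ultimately have *: "p * exp (k * a) \<le> (\<integral>x. exp (k * f x) \<partial>M)"
    by linarith
  have "ln (p * exp (k * a)) \<le> ln (\<integral>x. exp (k * f x) \<partial>M)"
    using * p by (subst ln_le_cancel_iff) (auto intro: exp_integral_pos[OF f])
  then have "ln p + k * a \<le> ln (\<integral>x. exp (k * f x) \<partial>M)"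
    using p by (simp add: ln_mult)
  then have "(1/k) * (ln p + k * a) \<le> (1/k) * ln (\<integral>x. exp (k * f x) \<partial>M)"
    using k by (simp add: divide_right_mono)
  then show ?thesis using k unfolding LSE_def by (simp add: field_simps)
qed

lemma exp_jensen:
  assumes h: "(h::'a\<Rightarrow>real) \<in> borel_measurable M" "\<And>x. x \<in> space M \<Longrightarrow> \<bar>h x\<bar> \<le> B"
  shows "exp (\<integral>x. h x \<partial>M) \<le> (\<integral>x. exp (h x) \<partial>M)"
proof -
  define a where "a = (\<integral>x. h x \<partial>M)"
  have ih: "integrable M h" by (rule bnd_integrable[OF h])
  have "(\<integral>x. exp a * (1 + h x - a) \<partial>M) \<le> (\<integral>x. exp (h x) \<partial>M)"
  proof (rule Bochner_Integration.integral_mono)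
    show "integrable M (\<lambda>x. exp (h x))" using exp_integrable[OF h, of 1] by simp
    show "integrable M (\<lambda>x. exp a * (1 + h x - a))" using ih by auto
    fix x
    have "exp a * (1 + (h x - a)) \<le> exp a * exp (h x - a)"
      by (intro mult_left_mono exp_ge_add_one_self) auto
    moreover have "exp a * exp (h x - a) = exp (h x)" by (simp add: exp_diff)
    ultimately show "exp a * (1 + h x - a) \<le> exp (h x)"
      by (metis add_diff_eq)
  qed
  moreover have "(\<integral>x. exp a * (1 + h x - a) \<partial>M) = exp a"
  proof -
    have "(\<integral>x. exp a * (1 + h x - a) \<partial>M) = exp a * (\<integral>x. (1 + h x - a) \<partial>M)" by simp
    also have "(\<integral>x. (1 + h x - a) \<partial>M) = (\<integral>x. (1 - a) + h x \<partial>M)" by (simp add: algebra_simps)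
    also have "\<dots> = (1 - a) + a" using ih by (simp add: a_def prob_space)
    finally show ?thesis by simp
  qed
  ultimately show ?thesis by (simp add: a_def)
qed

lemma LSE_jensen:
  assumes k: "k > 0"
    and f: "(f::'a\<Rightarrow>real) \<in> borel_measurable M" "\<And>x. x \<in> space M \<Longrightarrow> \<bar>f x\<bar> \<le> B"
  shows "(\<integral>x. f x \<partial>M) \<le> LSE k M f"
proof -
  have hb: "\<And>x. x \<in> space M \<Longrightarrow> \<bar>k * f x\<bar> \<le> k * B" using f(2) k by (simp add: abs_mult)
  have "exp (\<integral>x. k * f x \<partial>M) \<le> (\<integral>x. exp (k * f x) \<partial>M)"
    by (rule exp_jensen[of "\<lambda>x. k * f x", OF _ hb]) (use f in auto)
  then have "k * (\<integral>x. f x \<partial>M) \<le> ln (\<integral>x. exp (k * f x) \<partial>M)"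
    using exp_integral_pos[OF f, of k] by (simp add: ln_ge_iff)
  then show ?thesis using k unfolding LSE_def by (simp add: field_simps)
qed

end

lemma SUP_shift:
  fixes f g :: "'x \<Rightarrow> real"
  assumes "S \<noteq> {}" "\<And>s. s \<in> S \<Longrightarrow> \<bar>g s\<bar> \<le> B" "\<And>s. s \<in> S \<Longrightarrow> f s \<le> g s + e"
  shows "(SUP s\<in>S. f s) \<le> (SUP s\<in>S. g s) + e"
proof (rule cSUP_least[OF assms(1)])
  fix s assume s: "s \<in> S"
  have bdd: "bdd_above (g ` S)" using assms(2) by (intro bdd_aboveI2[where M=B]) (auto simp: abs_le_iff)
  have "g s \<le> (SUP s\<in>S. g s)" by (rule cSUP_upper[OF s bdd])
  then show "f s \<le> (SUP s\<in>S. g s) + e" using assms(3)[OF s] by linarith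
qed

lemma SUP_ge:
  fixes g :: "'x \<Rightarrow> real"
  assumes "s \<in> S" "\<And>s. s \<in> S \<Longrightarrow> \<bar>g s\<bar> \<le> B"
  shows "g s \<le> (SUP s\<in>S. g s)"
proof -
  have bdd: "bdd_above (g ` S)" using assms(2) by (intro bdd_aboveI2[where M=B]) (auto simp: abs_le_iff)
  show ?thesis by (rule cSUP_upper[OF assms(1) bdd])
qed

lemma SUP_abs_bnd:
  fixes g :: "'x \<Rightarrow> real"
  assumes "S \<noteq> {}" "\<And>s. s \<in> S \<Longrightarrow> \<bar>g s\<bar> \<le> B"
  shows "\<bar>(SUP s\<in>S. g s)\<bar> \<le> B"
proof -
  obtain s where s: "s \<in> S" using assms(1) by auto
  have "g s \<le> (SUP s\<in>S. g s)" by (rule SUP_ge[OF s assms(2)])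
  moreover have "(SUP s\<in>S. g s) \<le> B"
    using assms by (intro cSUP_least) (auto simp: abs_le_iff)
  moreover have "- B \<le> g s" using assms(2)[OF s] by (simp add: abs_le_iff)
  ultimately show ?thesis by (simp add: abs_le_iff)
qed

lemma abs_bnd2: "\<bar>a\<bar> \<le> C \<Longrightarrow> \<bar>b\<bar> \<le> B \<Longrightarrow> \<bar>- a - b\<bar> \<le> C + (B::real)"
  by (simp add: abs_le_iff)

lemma abs_lt_le1: "\<bar>a - b\<bar> < (e::real) \<Longrightarrow> a \<le> b + e" by (simp add: abs_less_iff)
lemma abs_lt_le2: "\<bar>a - b\<bar> < (e::real) \<Longrightarrow> b \<le> a + e" by (simp add: abs_less_iff)

lemma ctrans'_bnd:
  assumes "Y \<noteq> {}" "\<And>x y. x \<in> X \<Longrightarrow> y \<in> Y \<Longrightarrow> \<bar>c (x, y)\<bar> \<le> Cc" "\<And>y. y \<in> Y \<Longrightarrow> \<bar>v y\<bar> \<le> B"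
    and "x \<in> X"
  shows "\<bar>ctrans' Y c v x\<bar> \<le> Cc + B"
  unfolding ctrans'_def
proof (rule SUP_abs_bnd[OF assms(1)])
  fix y assume "y \<in> Y"
  then show "\<bar>- c (x, y) - v y\<bar> \<le> Cc + B" using assms(2)[OF assms(4)] assms(3)
    by (intro abs_bnd2) auto
qed

lemma ctrans_bnd:
  assumes "X \<noteq> {}" "\<And>x y. x \<in> X \<Longrightarrow> y \<in> Y \<Longrightarrow> \<bar>c (x, y)\<bar> \<le> Cc" "\<And>x. x \<in> X \<Longrightarrow> \<bar>u x\<bar> \<le> B"
    and "y \<in> Y"
  shows "\<bar>ctrans X c u y\<bar> \<le> Cc + B"
  unfolding ctrans_def
proof (rule SUP_abs_bnd[OF assms(1)])
  fix x assume "x \<in> X"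
  then show "\<bar>- c (x, y) - u x\<bar> \<le> Cc + B" using assms(2)[OF _ assms(4)] assms(3)
    by (intro abs_bnd2) auto
qed

locale cbounds =
  fixes X :: "'a set" and Y :: "'b set" and c :: "'a \<times> 'b \<Rightarrow> real" and Cc :: real
  assumes Xne: "X \<noteq> {}" and Yne: "Y \<noteq> {}"
    and cb: "\<And>x y. x \<in> X \<Longrightarrow> y \<in> Y \<Longrightarrow> \<bar>c (x, y)\<bar> \<le> Cc"
begin

lemma cc_le:
  assumes f: "\<And>x. x \<in> X \<Longrightarrow> \<bar>f x\<bar> \<le> B" and x: "x \<in> X"
  shows "ctrans' Y c (ctrans X c f) x \<le> f x"
  unfolding ctrans'_def
proof (rule cSUP_least[OF Yne])
  fix y assume y: "y \<in> Y"
  have "- c (x, y) - f x \<le> ctrans X c f y"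
    unfolding ctrans_def
    by (rule SUP_ge[where g="\<lambda>x. - c (x, y) - f x" and B="Cc + B", OF x])
       (blast intro: abs_bnd2 cb[OF _ y] f)
  then show "- c (x, y) - ctrans X c f y \<le> f x" by linarith
qed

lemma cc_mono:
  assumes f: "\<And>x. x \<in> X \<Longrightarrow> \<bar>f x\<bar> \<le> B" and g: "\<And>x. x \<in> X \<Longrightarrow> \<bar>g x\<bar> \<le> B'"
    and le: "\<And>x. x \<in> X \<Longrightarrow> f x \<le> g x + e" and x: "x \<in> X"
  shows "ctrans' Y c (ctrans X c f) x \<le> ctrans' Y c (ctrans X c g) x + e"
proof -
  have gc: "ctrans X c g y \<le> ctrans X c f y + e" if y: "y \<in> Y" for y
    unfolding ctrans_def
  proof (rule SUP_shift[OF Xne, where B="Cc + B"])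
    fix s assume s: "s \<in> X"
    show "\<bar>- c (s, y) - f s\<bar> \<le> Cc + B" by (intro abs_bnd2 cb[OF s y] f[OF s])
    show "- c (s, y) - g s \<le> - c (s, y) - f s + e" using le[OF s] by linarith
  qed
  show ?thesis
    unfolding ctrans'_def
  proof (rule SUP_shift[OF Yne, where B="Cc + (Cc + B')"])
    fix y assume y: "y \<in> Y"
    show "\<bar>- c (x, y) - ctrans X c g y\<bar> \<le> Cc + (Cc + B')"
      using ctrans_bnd[where X=X and Y=Y and c=c and Cc=Cc and u=g and B=B', OF Xne cb g y] cb[OF x y] by linarith
    show "- c (x, y) - ctrans X c f y \<le> - c (x, y) - ctrans X c g y + e"
      using gc[OF y] by linarith
  qed
qed

lemma ctrans'_cc:
  assumes v: "\<And>y. y \<in> Y \<Longrightarrow> \<bar>v y\<bar> \<le> B" and x: "x \<in> X"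
  shows "ctrans' Y c v x \<le> ctrans' Y c (ctrans X c (ctrans' Y c v)) x"
proof -
  let ?g = "ctrans' Y c v"
  have gb: "\<And>x. x \<in> X \<Longrightarrow> \<bar>?g x\<bar> \<le> Cc + B" by (rule ctrans'_bnd[where X=X and Y=Y and c=c and Cc=Cc and v=v and B=B, OF Yne cb v])
  have gc: "ctrans X c ?g y \<le> v y" if y: "y \<in> Y" for y
    unfolding ctrans_def
  proof (rule cSUP_least[OF Xne])
    fix x assume x: "x \<in> X"
    have "- c (x, y) - v y \<le> ?g x"
      unfolding ctrans'_def
      by (rule SUP_ge[where g="\<lambda>y. - c (x, y) - v y" and B="Cc + B", OF y])
         (blast intro: abs_bnd2 cb[OF x] v)
    then show "- c (x, y) - ?g x \<le> v y" by linarith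
  qed
  have "(SUP y\<in>Y. - c (x, y) - v y) \<le> (SUP y\<in>Y. - c (x, y) - ctrans X c ?g y) + 0"
  proof (rule SUP_shift[OF Yne, where B="Cc + (Cc + (Cc + B))"])
    fix y assume y: "y \<in> Y"
    show "\<bar>- c (x, y) - ctrans X c ?g y\<bar> \<le> Cc + (Cc + (Cc + B))"
      by (intro abs_bnd2 cb[OF x y] ctrans_bnd[where X=X and Y=Y and c=c and Cc=Cc and u="ctrans' Y c v" and B="Cc+B", OF Xne cb gb y])
    show "- c (x, y) - v y \<le> - c (x, y) - ctrans X c ?g y + 0" using gc[OF y] by linarith
  qed
  then show ?thesis unfolding ctrans'_def by simp
qed

end

lemma cont_bnd:
  fixes f :: "'x::topological_space \<Rightarrow> real"
  assumes "continuous_on S f" "compact S"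
  obtains B where "\<And>x. x \<in> S \<Longrightarrow> \<bar>f x\<bar> \<le> B"
proof -
  have "compact (f ` S)" by (rule compact_continuous_image[OF assms])
  then have "bounded (f ` S)" by (rule compact_imp_bounded)
  then obtain B where "\<And>z. z \<in> f ` S \<Longrightarrow> norm z \<le> B" by (auto simp: bounded_iff)
  then have "\<And>x. x \<in> S \<Longrightarrow> \<bar>f x\<bar> \<le> B" by auto
  with that show ?thesis .
qed

locale sk_setting =
  fixes X :: "'a::euclidean_space set" and Y :: "'b::euclidean_space set"
    and \<mu> :: "'a measure" and \<nu> :: "'b measure" and c :: "'a \<times> 'b \<Rightarrow> real"
  assumes cX: "compact X" and cY: "compact Y"
    and Pm: "prob_space \<mu>" and Pn: "prob_space \<nu>"
    and sX: "sets \<mu> = sets (restrict_space borel X)"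
    and sY: "sets \<nu> = sets (restrict_space borel Y)"
    and cc: "continuous_on (X \<times> Y) c"
begin

lemma spX: "space \<mu> = X"
  using sets_eq_imp_space_eq[OF sX] by (simp add: space_restrict_space)

lemma spY: "space \<nu> = Y"
  using sets_eq_imp_space_eq[OF sY] by (simp add: space_restrict_space)

lemma Xne: "X \<noteq> {}"
  using prob_space.not_empty[OF Pm] spX by simp

lemma Yne: "Y \<noteq> {}"
  using prob_space.not_empty[OF Pn] spY by simp

lemma measX: "continuous_on X f \<Longrightarrow> (f::'a \<Rightarrow> real) \<in> borel_measurable \<mu>"
  using borel_measurable_continuous_on_restrict measurable_cong_sets[OF sX refl] by blast

lemma measY: "continuous_on Y f \<Longrightarrow> (f::'b \<Rightarrow> real) \<in> borel_measurable \<nu>"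
  using borel_measurable_continuous_on_restrict measurable_cong_sets[OF sY refl] by blast

definition "Cc = (SOME C. 0 \<le> C \<and> (\<forall>x\<in>X. \<forall>y\<in>Y. \<bar>c (x, y)\<bar> \<le> C))"

lemma Cc: "0 \<le> Cc" "\<And>x y. x \<in> X \<Longrightarrow> y \<in> Y \<Longrightarrow> \<bar>c (x, y)\<bar> \<le> Cc"
proof -
  obtain B where B: "\<And>p. p \<in> X \<times> Y \<Longrightarrow> \<bar>c p\<bar> \<le> B"
    using cont_bnd[OF cc compact_Times[OF cX cY]] by blast
  have "\<exists>C. 0 \<le> C \<and> (\<forall>x\<in>X. \<forall>y\<in>Y. \<bar>c (x, y)\<bar> \<le> C)"
    by (rule exI[of _ "\<bar>B\<bar>"]) (use B in force)
  then have "0 \<le> Cc \<and> (\<forall>x\<in>X. \<forall>y\<in>Y. \<bar>c (x, y)\<bar> \<le> Cc)"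
    unfolding Cc_def by (rule someI_ex)
  then show "0 \<le> Cc" "\<And>x y. x \<in> X \<Longrightarrow> y \<in> Y \<Longrightarrow> \<bar>c (x, y)\<bar> \<le> Cc" by auto
qed

sublocale cbounds X Y c Cc
  by unfold_locales (use Xne Yne Cc in auto)

lemma c_unif:
  assumes "e > 0"
  obtains d where "d > 0"
    "\<And>x x' y. x \<in> X \<Longrightarrow> x' \<in> X \<Longrightarrow> y \<in> Y \<Longrightarrow> dist x x' < d \<Longrightarrow> \<bar>c (x, y) - c (x', y)\<bar> < e"
    "\<And>x y y'. x \<in> X \<Longrightarrow> y \<in> Y \<Longrightarrow> y' \<in> Y \<Longrightarrow> dist y y' < d \<Longrightarrow> \<bar>c (x, y) - c (x, y')\<bar> < e"
proof -
  have "uniformly_continuous_on (X \<times> Y) c"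
    by (rule compact_uniformly_continuous[OF cc compact_Times[OF cX cY]])
  then obtain d where d: "d > 0" "\<And>p p'. p \<in> X \<times> Y \<Longrightarrow> p' \<in> X \<times> Y \<Longrightarrow> dist p' p < d \<Longrightarrow> dist (c p') (c p) < e"
    using assms unfolding uniformly_continuous_on_def by metis
  show ?thesis
  proof (rule that[OF d(1)])
    fix x x' y assume "x \<in> X" "x' \<in> X" "y \<in> Y" "dist x x' < d"
    then show "\<bar>c (x, y) - c (x', y)\<bar> < e"
      using d(2)[of "(x', y)" "(x, y)"] by (simp add: dist_Pair_Pair dist_real_def)
  next
    fix x y y' assume "x \<in> X" "y \<in> Y" "y' \<in> Y" "dist y y' < d"
    then show "\<bar>c (x, y) - c (x, y')\<bar> < e"
      using d(2)[of "(x, y')" "(x, y)"] by (simp add: dist_Pair_Pair dist_real_def)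
  qed
qed

lemma c_cont_x: "y \<in> Y \<Longrightarrow> continuous_on X (\<lambda>x. c (x, y))"
  by (rule continuous_on_compose2[OF cc]) (auto intro!: continuous_intros)

lemma c_cont_y: "x \<in> X \<Longrightarrow> continuous_on Y (\<lambda>y. c (x, y))"
  by (rule continuous_on_compose2[OF cc]) (auto intro!: continuous_intros)

lemma vk_LSE: "vk k c \<mu> u y = LSE k \<mu> (\<lambda>x. - c (x, y) - u x)"
  unfolding vk_def LSE_def by (simp add: algebra_simps)

lemma Sk_LSE: "Sk k c \<mu> \<nu> u x = LSE k \<nu> (\<lambda>y. - c (x, y) - vk k c \<mu> u y)"
  unfolding Sk_def LSE_def by (simp add: algebra_simps)

lemma LSE_mod_X:
  assumes k: "k > 0" and f: "continuous_on X f" and g: "continuous_on X g"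
    and le: "\<And>x. x \<in> X \<Longrightarrow> f x \<le> g x + e"
  shows "LSE k \<mu> f \<le> LSE k \<mu> g + e"
proof -
  obtain Bf where Bf: "\<And>x. x \<in> X \<Longrightarrow> \<bar>f x\<bar> \<le> Bf" using cont_bnd[OF f cX] by blast
  obtain Bg where Bg: "\<And>x. x \<in> X \<Longrightarrow> \<bar>g x\<bar> \<le> Bg" using cont_bnd[OF g cX] by blast
  show ?thesis
    by (rule prob_space.LSE_mono_shift[OF Pm k measX[OF f] _ measX[OF g]])
       (use Bf Bg le spX in auto)
qed

lemma LSE_mod_Y:
  assumes k: "k > 0" and f: "continuous_on Y f" and g: "continuous_on Y g"
    and le: "\<And>y. y \<in> Y \<Longrightarrow> f y \<le> g y + e"
  shows "LSE k \<nu> f \<le> LSE k \<nu> g + e"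
proof -
  obtain Bf where Bf: "\<And>x. x \<in> Y \<Longrightarrow> \<bar>f x\<bar> \<le> Bf" using cont_bnd[OF f cY] by blast
  obtain Bg where Bg: "\<And>x. x \<in> Y \<Longrightarrow> \<bar>g x\<bar> \<le> Bg" using cont_bnd[OF g cY] by blast
  show ?thesis
    by (rule prob_space.LSE_mono_shift[OF Pn k measY[OF f] _ measY[OF g]])
       (use Bf Bg le spY in auto)
qed

lemma vk_mod:
  assumes k: "k > 0" and u: "continuous_on X u" and y: "y \<in> Y" "y' \<in> Y"
    and le: "\<And>x. x \<in> X \<Longrightarrow> c (x, y') \<le> c (x, y) + e"
  shows "vk k c \<mu> u y \<le> vk k c \<mu> u y' + e"
  unfolding vk_LSE
proof (rule LSE_mod_X[OF k])
  show "continuous_on X (\<lambda>x. - c (x, y) - u x)" by (auto intro!: continuous_intros c_cont_x y u)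
  show "continuous_on X (\<lambda>x. - c (x, y') - u x)" by (auto intro!: continuous_intros c_cont_x y u)
  fix x assume "x \<in> X" then show "- c (x, y) - u x \<le> - c (x, y') - u x + e" using le[of x] by linarith
qed

lemma vk_cont:
  assumes k: "k > 0" and u: "continuous_on X u"
  shows "continuous_on Y (vk k c \<mu> u)"
  unfolding continuous_on_iff
proof (intro ballI allI impI)
  fix y e assume y: "y \<in> Y" and e: "(0::real) < e"
  obtain d where d: "d > 0"
    "\<And>x y y'. x \<in> X \<Longrightarrow> y \<in> Y \<Longrightarrow> y' \<in> Y \<Longrightarrow> dist y y' < d \<Longrightarrow> \<bar>c (x, y) - c (x, y')\<bar> < e/2"
    using c_unif[of "e/2"] e by (metis half_gt_zero)
  show "\<exists>d>0. \<forall>y'\<in>Y. dist y' y < d \<longrightarrow> dist (vk k c \<mu> u y') (vk k c \<mu> u y) < e"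
  proof (intro exI[of _ d] conjI ballI impI)
    fix y' assume y': "y' \<in> Y" "dist y' y < d"
    have cl: "\<And>x. x \<in> X \<Longrightarrow> \<bar>c (x, y') - c (x, y)\<bar> < e/2" using d(2)[OF _ y'(1) y y'(2)] by blast
    have "vk k c \<mu> u y' \<le> vk k c \<mu> u y + e/2"
      by (rule vk_mod[OF k u y'(1) y]) (erule abs_lt_le2[OF cl])
    moreover have "vk k c \<mu> u y \<le> vk k c \<mu> u y' + e/2"
      by (rule vk_mod[OF k u y y'(1)]) (erule abs_lt_le1[OF cl])
    ultimately show "dist (vk k c \<mu> u y') (vk k c \<mu> u y) < e"
      using e by (simp add: dist_real_def abs_le_iff)
  qed (use d in auto)
qed

lemma Sk_mod:
  assumes k: "k > 0" and u: "continuous_on X u" and x: "x \<in> X" "x' \<in> X"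
    and le: "\<And>y. y \<in> Y \<Longrightarrow> c (x', y) \<le> c (x, y) + e"
  shows "Sk k c \<mu> \<nu> u x \<le> Sk k c \<mu> \<nu> u x' + e"
  unfolding Sk_LSE
proof (rule LSE_mod_Y[OF k])
  show "continuous_on Y (\<lambda>y. - c (x, y) - vk k c \<mu> u y)" by (auto intro!: continuous_intros c_cont_y x vk_cont[OF k u])
  show "continuous_on Y (\<lambda>y. - c (x', y) - vk k c \<mu> u y)" by (auto intro!: continuous_intros c_cont_y x vk_cont[OF k u])
  fix y assume "y \<in> Y" then show "- c (x, y) - vk k c \<mu> u y \<le> - c (x', y) - vk k c \<mu> u y + e" using le[of y] by linarith
qed

lemma Sk_cont:
  assumes k: "k > 0" and u: "continuous_on X u"
  shows "continuous_on X (Sk k c \<mu> \<nu> u)"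
  unfolding continuous_on_iff
proof (intro ballI allI impI)
  fix x e assume x: "x \<in> X" and e: "(0::real) < e"
  obtain d where d: "d > 0"
    "\<And>x x' y. x \<in> X \<Longrightarrow> x' \<in> X \<Longrightarrow> y \<in> Y \<Longrightarrow> dist x x' < d \<Longrightarrow> \<bar>c (x, y) - c (x', y)\<bar> < e/2"
    using c_unif[of "e/2"] e by (metis half_gt_zero)
  show "\<exists>d>0. \<forall>x'\<in>X. dist x' x < d \<longrightarrow> dist (Sk k c \<mu> \<nu> u x') (Sk k c \<mu> \<nu> u x) < e"
  proof (intro exI[of _ d] conjI ballI impI)
    fix x' assume x': "x' \<in> X" "dist x' x < d"
    have cl: "\<And>y. y \<in> Y \<Longrightarrow> \<bar>c (x', y) - c (x, y)\<bar> < e/2" using d(2)[OF x'(1) x _ x'(2)] by blast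
    have "Sk k c \<mu> \<nu> u x' \<le> Sk k c \<mu> \<nu> u x + e/2"
      by (rule Sk_mod[OF k u x'(1) x]) (erule abs_lt_le2[OF cl])
    moreover have "Sk k c \<mu> \<nu> u x \<le> Sk k c \<mu> \<nu> u x' + e/2"
      by (rule Sk_mod[OF k u x x'(1)]) (erule abs_lt_le1[OF cl])
    ultimately show "dist (Sk k c \<mu> \<nu> u x') (Sk k c \<mu> \<nu> u x) < e"
      using e by (simp add: dist_real_def abs_le_iff)
  qed (use d in auto)
qed

end

context sk_setting
begin

lemma ident_meas_X: "(\<lambda>x. x) \<in> measurable \<mu> borel"
proof -
  have "(\<lambda>x. x) \<in> measurable (restrict_space borel X) borel"
    by (rule measurable_restrict_space1) simp
  moreover have "measurable \<mu> borel = measurable (restrict_space borel X) (borel::'a measure)"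
    by (rule measurable_cong_sets[OF sX refl])
  ultimately show ?thesis by simp
qed

lemma ident_meas_Y: "(\<lambda>x. x) \<in> measurable \<nu> borel"
proof -
  have "(\<lambda>x. x) \<in> measurable (restrict_space borel Y) borel"
    by (rule measurable_restrict_space1) simp
  moreover have "measurable \<nu> borel = measurable (restrict_space borel Y) (borel::'b measure)"
    by (rule measurable_cong_sets[OF sY refl])
  ultimately show ?thesis by simp
qed

lemma fubini:
  fixes F :: "'a \<times> 'b \<Rightarrow> real"
  assumes F: "continuous_on (X \<times> Y) F"
  shows "(\<integral>x. (\<integral>y. F (x, y) \<partial>\<nu>) \<partial>\<mu>) = (\<integral>y. (\<integral>x. F (x, y) \<partial>\<mu>) \<partial>\<nu>)"
proof -
  interpret pm: prob_space \<mu> by (rule Pm)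
  interpret pn: prob_space \<nu> by (rule Pn)
  interpret pair_prob_space \<mu> \<nu> by unfold_locales
  have "(\<lambda>p. (fst p, snd p)) \<in> measurable (\<mu> \<Otimes>\<^sub>M \<nu>) (borel \<Otimes>\<^sub>M borel)"
    by (intro measurable_Pair measurable_compose[OF measurable_fst ident_meas_X]
        measurable_compose[OF measurable_snd ident_meas_Y])
  then have "(\<lambda>p. p) \<in> measurable (\<mu> \<Otimes>\<^sub>M \<nu>) borel"
    by (simp add: borel_prod)
  then have "(\<lambda>p. p) \<in> measurable (\<mu> \<Otimes>\<^sub>M \<nu>) (restrict_space borel (X \<times> Y))"
    by (intro measurable_restrict_space2) (auto simp: space_pair_measure spX spY)
  then have mF: "F \<in> borel_measurable (\<mu> \<Otimes>\<^sub>M \<nu>)"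
    using measurable_comp[OF _ borel_measurable_continuous_on_restrict[OF F]] by (simp add: comp_def)
  obtain B where B: "\<And>p. p \<in> X \<times> Y \<Longrightarrow> \<bar>F p\<bar> \<le> B"
    using cont_bnd[OF F compact_Times[OF cX cY]] by blast
  have "integrable (\<mu> \<Otimes>\<^sub>M \<nu>) F"
    by (rule integrable_const_bound[where B=B]) (use B mF in \<open>auto simp: space_pair_measure spX spY\<close>)
  then have "integrable (\<mu> \<Otimes>\<^sub>M \<nu>) (case_prod (\<lambda>x y. F (x, y)))" by simp
  from Fubini_integral[OF this] show ?thesis by simp
qed

lemma exp_LSE:
  assumes P: "prob_space M" and k: "k > 0"
    and f: "(f::'x\<Rightarrow>real) \<in> borel_measurable M" "\<And>x. x \<in> space M \<Longrightarrow> \<bar>f x\<bar> \<le> B"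
  shows "exp (k * LSE k M f) = (\<integral>x. exp (k * f x) \<partial>M)"
  using prob_space.exp_integral_pos[OF P f, of k] k unfolding LSE_def by simp

lemma intX_cont: "continuous_on X f \<Longrightarrow> integrable \<mu> (f::'a \<Rightarrow> real)"
  using prob_space.bnd_integrable[OF Pm measX] cont_bnd[of X f] cX spX by metis

lemma intY_cont: "continuous_on Y f \<Longrightarrow> integrable \<nu> (f::'b \<Rightarrow> real)"
  using prob_space.bnd_integrable[OF Pn measY] cont_bnd[of Y f] cY spY by metis

lemma exp_vk:
  assumes k: "k > 0" and u: "continuous_on X u" and y: "y \<in> Y"
  shows "exp (k * vk k c \<mu> u y) = (\<integral>x. exp (k * (- c (x, y) - u x)) \<partial>\<mu>)"
proof -
  have cf: "continuous_on X (\<lambda>x. - c (x, y) - u x)" by (auto intro!: continuous_intros c_cont_x y u)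
  obtain B where "\<And>x. x \<in> X \<Longrightarrow> \<bar>- c (x, y) - u x\<bar> \<le> B" using cont_bnd[OF cf cX] by blast
  then show ?thesis unfolding vk_LSE
    by (intro exp_LSE[OF Pm k measX[OF cf]]) (auto simp: spX)
qed

lemma exp_Sk:
  assumes k: "k > 0" and u: "continuous_on X u" and x: "x \<in> X"
  shows "exp (k * Sk k c \<mu> \<nu> u x) = (\<integral>y. exp (k * (- c (x, y) - vk k c \<mu> u y)) \<partial>\<nu>)"
proof -
  have cf: "continuous_on Y (\<lambda>y. - c (x, y) - vk k c \<mu> u y)"
    by (auto intro!: continuous_intros c_cont_y x vk_cont k u)
  obtain B where "\<And>y. y \<in> Y \<Longrightarrow> \<bar>- c (x, y) - vk k c \<mu> u y\<bar> \<le> B" using cont_bnd[OF cf cY] by blast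
  then show ?thesis unfolding Sk_LSE
    by (intro exp_LSE[OF Pn k measY[OF cf]]) (auto simp: spY)
qed

lemma swap_identity:
  assumes a: "continuous_on X a" and b: "continuous_on Y b"
  shows "(\<integral>x. exp (- k * a x) * (\<integral>y. exp (k * (- c (x, y) - b y)) \<partial>\<nu>) \<partial>\<mu>)
       = (\<integral>y. exp (- k * b y) * (\<integral>x. exp (k * (- c (x, y) - a x)) \<partial>\<mu>) \<partial>\<nu>)"
proof -
  define F where "F = (\<lambda>p. exp (k * (- c p - a (fst p) - b (snd p))))"
  have cF: "continuous_on (X \<times> Y) F"
    unfolding F_def
    by (intro continuous_intros cc continuous_on_compose2[OF a] continuous_on_compose2[OF b]) auto
  have "(\<integral>x. exp (- k * a x) * (\<integral>y. exp (k * (- c (x, y) - b y)) \<partial>\<nu>) \<partial>\<mu>)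
      = (\<integral>x. (\<integral>y. F (x, y) \<partial>\<nu>) \<partial>\<mu>)"
  proof (intro Bochner_Integration.integral_cong refl)
    fix x
    have "exp (- k * a x) * (\<integral>y. exp (k * (- c (x, y) - b y)) \<partial>\<nu>)
        = (\<integral>y. exp (- k * a x) * exp (k * (- c (x, y) - b y)) \<partial>\<nu>)" by simp
    also have "\<dots> = (\<integral>y. F (x, y) \<partial>\<nu>)"
      unfolding F_def by (intro Bochner_Integration.integral_cong refl) (simp add: exp_add[symmetric] algebra_simps)
    finally show "exp (- k * a x) * (\<integral>y. exp (k * (- c (x, y) - b y)) \<partial>\<nu>) = (\<integral>y. F (x, y) \<partial>\<nu>)" .
  qed
  also have "\<dots> = (\<integral>y. (\<integral>x. F (x, y) \<partial>\<mu>) \<partial>\<nu>)" by (rule fubini[OF cF])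
  also have "\<dots> = (\<integral>y. exp (- k * b y) * (\<integral>x. exp (k * (- c (x, y) - a x)) \<partial>\<mu>) \<partial>\<nu>)"
  proof (intro Bochner_Integration.integral_cong refl)
    fix y
    have "exp (- k * b y) * (\<integral>x. exp (k * (- c (x, y) - a x)) \<partial>\<mu>)
        = (\<integral>x. exp (- k * b y) * exp (k * (- c (x, y) - a x)) \<partial>\<mu>)" by simp
    also have "\<dots> = (\<integral>x. F (x, y) \<partial>\<mu>)"
      unfolding F_def by (intro Bochner_Integration.integral_cong refl) (simp add: exp_add[symmetric] algebra_simps)
    finally show "(\<integral>x. F (x, y) \<partial>\<mu>) = exp (- k * b y) * (\<integral>x. exp (k * (- c (x, y) - a x)) \<partial>\<mu>)" by simp
  qed
  finally show ?thesis .
qed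

end

context sk_setting
begin

lemma intcX: "integrable \<mu> (\<lambda>x. a::real)" by (rule intX_cont) simp
lemma intcY: "integrable \<nu> (\<lambda>x. a::real)" by (rule intY_cont) simp

lemma jensen_le0:
  fixes h :: "'a \<Rightarrow> real"
  assumes h: "continuous_on X h" and eq: "(\<integral>x. exp (h x) \<partial>\<mu>) = 1"
  shows "(\<integral>x. h x \<partial>\<mu>) \<le> 0"
proof -
  obtain B where "\<And>x. x \<in> X \<Longrightarrow> \<bar>h x\<bar> \<le> B" using cont_bnd[OF h cX] by blast
  then have "exp (\<integral>x. h x \<partial>\<mu>) \<le> (\<integral>x. exp (h x) \<partial>\<mu>)"
    by (intro prob_space.exp_jensen[OF Pm measX[OF h]]) (auto simp: spX)
  then show ?thesis using eq by simp
qed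

lemma jensen_le0_Y:
  fixes h :: "'b \<Rightarrow> real"
  assumes h: "continuous_on Y h" and eq: "(\<integral>y. exp (h y) \<partial>\<nu>) = 1"
  shows "(\<integral>y. h y \<partial>\<nu>) \<le> 0"
proof -
  obtain B where "\<And>x. x \<in> Y \<Longrightarrow> \<bar>h x\<bar> \<le> B" using cont_bnd[OF h cY] by blast
  then have "exp (\<integral>x. h x \<partial>\<nu>) \<le> (\<integral>x. exp (h x) \<partial>\<nu>)"
    by (intro prob_space.exp_jensen[OF Pn measY[OF h]]) (auto simp: spY)
  then show ?thesis using eq by simp
qed

lemma step_I:
  assumes k: "k > 0" and u: "continuous_on X u"
  shows "(\<integral>x. Sk k c \<mu> \<nu> u x \<partial>\<mu>) \<le> (\<integral>x. u x \<partial>\<mu>)"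
proof -
  let ?v = "vk k c \<mu> u" and ?u' = "Sk k c \<mu> \<nu> u"
  have cv: "continuous_on Y ?v" by (rule vk_cont[OF k u])
  have cu': "continuous_on X ?u'" by (rule Sk_cont[OF k u])
  have "(\<integral>x. exp (k * (?u' x - u x)) \<partial>\<mu>)
      = (\<integral>x. exp (- k * u x) * (\<integral>y. exp (k * (- c (x, y) - ?v y)) \<partial>\<nu>) \<partial>\<mu>)"
  proof (intro Bochner_Integration.integral_cong refl)
    fix x assume "x \<in> space \<mu>" then have x: "x \<in> X" by (simp add: spX)
    show "exp (k * (?u' x - u x)) = exp (- k * u x) * (\<integral>y. exp (k * (- c (x, y) - ?v y)) \<partial>\<nu>)"
    proof -
      have "exp (k * (?u' x - u x)) = exp (- k * u x) * exp (k * ?u' x)"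
        by (subst exp_add[symmetric]) (simp add: algebra_simps)
      then show ?thesis using exp_Sk[OF k u x] by simp
    qed
  qed
  also have "\<dots> = (\<integral>y. exp (- k * ?v y) * (\<integral>x. exp (k * (- c (x, y) - u x)) \<partial>\<mu>) \<partial>\<nu>)"
    by (rule swap_identity[OF u cv])
  also have "\<dots> = (\<integral>y. 1 \<partial>\<nu>)"
  proof (intro Bochner_Integration.integral_cong refl)
    fix y assume "y \<in> space \<nu>" then have y: "y \<in> Y" by (simp add: spY)
    show "exp (- k * ?v y) * (\<integral>x. exp (k * (- c (x, y) - u x)) \<partial>\<mu>) = 1"
      unfolding exp_vk[OF k u y, symmetric] by (simp flip: exp_add)
  qed
  also have "\<dots> = 1" using prob_space.prob_space[OF Pn] by simp
  finally have "(\<integral>x. exp (k * (?u' x - u x)) \<partial>\<mu>) = 1" .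
  then have "(\<integral>x. k * (?u' x - u x) \<partial>\<mu>) \<le> 0"
    by (intro jensen_le0) (auto intro!: continuous_intros cu' u)
  moreover have "(\<integral>x. k * (?u' x - u x) \<partial>\<mu>) = k * ((\<integral>x. ?u' x \<partial>\<mu>) - (\<integral>x. u x \<partial>\<mu>))"
    using intX_cont[OF cu'] intX_cont[OF u] by simp
  ultimately show ?thesis using k by (simp add: mult_le_0_iff)
qed

lemma step_J:
  assumes k: "k > 0" and u: "continuous_on X u"
  shows "(\<integral>y. vk k c \<mu> (Sk k c \<mu> \<nu> u) y \<partial>\<nu>) \<le> (\<integral>y. vk k c \<mu> u y \<partial>\<nu>)"
proof -
  let ?v = "vk k c \<mu> u" and ?u' = "Sk k c \<mu> \<nu> u"
  let ?v' = "vk k c \<mu> ?u'"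
  have cv: "continuous_on Y ?v" by (rule vk_cont[OF k u])
  have cu': "continuous_on X ?u'" by (rule Sk_cont[OF k u])
  have cv': "continuous_on Y ?v'" by (rule vk_cont[OF k cu'])
  have "(\<integral>y. exp (k * (?v' y - ?v y)) \<partial>\<nu>)
      = (\<integral>y. exp (- k * ?v y) * (\<integral>x. exp (k * (- c (x, y) - ?u' x)) \<partial>\<mu>) \<partial>\<nu>)"
  proof (intro Bochner_Integration.integral_cong refl)
    fix y assume "y \<in> space \<nu>" then have y: "y \<in> Y" by (simp add: spY)
    show "exp (k * (?v' y - ?v y)) = exp (- k * ?v y) * (\<integral>x. exp (k * (- c (x, y) - ?u' x)) \<partial>\<mu>)"
    proof -
      have "exp (k * (?v' y - ?v y)) = exp (- k * ?v y) * exp (k * ?v' y)"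
        by (subst exp_add[symmetric]) (simp add: algebra_simps)
      then show ?thesis using exp_vk[OF k cu' y] by simp
    qed
  qed
  also have "\<dots> = (\<integral>x. exp (- k * ?u' x) * (\<integral>y. exp (k * (- c (x, y) - ?v y)) \<partial>\<nu>) \<partial>\<mu>)"
    by (rule swap_identity[OF cu' cv, symmetric])
  also have "\<dots> = (\<integral>x. 1 \<partial>\<mu>)"
  proof (intro Bochner_Integration.integral_cong refl)
    fix x assume "x \<in> space \<mu>" then have x: "x \<in> X" by (simp add: spX)
    show "exp (- k * ?u' x) * (\<integral>y. exp (k * (- c (x, y) - ?v y)) \<partial>\<nu>) = 1"
      unfolding exp_Sk[OF k u x, symmetric] by (simp flip: exp_add)
  qed
  also have "\<dots> = 1" using prob_space.prob_space[OF Pm] by simp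
  finally have "(\<integral>y. exp (k * (?v' y - ?v y)) \<partial>\<nu>) = 1" .
  then have "(\<integral>y. k * (?v' y - ?v y) \<partial>\<nu>) \<le> 0"
    by (intro jensen_le0_Y) (auto intro!: continuous_intros cv' cv)
  moreover have "(\<integral>y. k * (?v' y - ?v y) \<partial>\<nu>) = k * ((\<integral>y. ?v' y \<partial>\<nu>) - (\<integral>y. ?v y \<partial>\<nu>))"
    using intY_cont[OF cv'] intY_cont[OF cv] by simp
  ultimately show ?thesis using k by (simp add: mult_le_0_iff)
qed

lemma IJ_lower:
  assumes k: "k > 0" and u: "continuous_on X u"
  shows "- Cc - (\<integral>x. u x \<partial>\<mu>) \<le> (\<integral>y. vk k c \<mu> u y \<partial>\<nu>)"
proof -
  have pt: "- Cc - (\<integral>x. u x \<partial>\<mu>) \<le> vk k c \<mu> u y" if y: "y \<in> Y" for y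
  proof -
    have cf: "continuous_on X (\<lambda>x. - c (x, y) - u x)" by (auto intro!: continuous_intros c_cont_x y u)
    obtain B where B: "\<And>x. x \<in> X \<Longrightarrow> \<bar>- c (x, y) - u x\<bar> \<le> B" using cont_bnd[OF cf cX] by blast
    have "(\<integral>x. (- Cc - u x) \<partial>\<mu>) \<le> (\<integral>x. (- c (x, y) - u x) \<partial>\<mu>)"
      by (rule Bochner_Integration.integral_mono)
         (use Cc(2)[OF _ y] in \<open>auto intro!: intX_cont continuous_intros u cf simp: spX abs_le_iff\<close>)
    also have "\<dots> \<le> vk k c \<mu> u y"
      unfolding vk_LSE by (rule prob_space.LSE_jensen[OF Pm k measX[OF cf]]) (use B in \<open>auto simp: spX\<close>)
    moreover have "(\<integral>x. (- Cc - u x) \<partial>\<mu>) = - Cc - (\<integral>x. u x \<partial>\<mu>)"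
      using intX_cont[OF u] intcX prob_space.prob_space[OF Pm] by (subst Bochner_Integration.integral_diff) auto
    ultimately show ?thesis by simp
  qed
  have "(\<integral>y. (- Cc - (\<integral>x. u x \<partial>\<mu>)) \<partial>\<nu>) \<le> (\<integral>y. vk k c \<mu> u y \<partial>\<nu>)"
    by (rule Bochner_Integration.integral_mono) (use pt in \<open>auto intro!: intY_cont vk_cont k u simp: spY\<close>)
  then show ?thesis using prob_space.prob_space[OF Pn] by simp
qed

lemma iter_cont:
  assumes k: "k > 0" and u0: "continuous_on X u0"
  shows "continuous_on X ((Sk k c \<mu> \<nu> ^^ m) u0)"
  by (induction m) (auto intro: Sk_cont[OF k] u0)

lemma iter_bound:
  assumes k: "k > 0" and u0: "continuous_on X u0" and B0: "\<And>x. x \<in> X \<Longrightarrow> \<bar>u0 x\<bar> \<le> B0"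
    and x: "x \<in> X"
  shows "\<bar>(Sk k c \<mu> \<nu> ^^ m) u0 x\<bar> \<le> B0 + 4 * Cc"
proof -
  define U where "U m = (Sk k c \<mu> \<nu> ^^ m) u0" for m
  have cU: "continuous_on X (U m)" for m unfolding U_def by (rule iter_cont[OF k u0])
  have US: "U (Suc m) = Sk k c \<mu> \<nu> (U m)" for m unfolding U_def by simp
  define I where "I m = (\<integral>x. U m x \<partial>\<mu>)" for m
  define J where "J m = (\<integral>y. vk k c \<mu> (U m) y \<partial>\<nu>)" for m
  have I_dec: "I m \<le> I 0" for m
  proof (induction m)
    case (Suc m) then show ?case using step_I[OF k cU[of m]] unfolding I_def US by simp
  qed simp
  have J_dec: "J m \<le> J 0" for m
  proof (induction m)
    case (Suc m) then show ?case using step_J[OF k cU[of m]] unfolding J_def US by simp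
  qed simp
  have IJ: "- Cc - I m \<le> J m" for m unfolding I_def J_def by (rule IJ_lower[OF k cU])
  have B0': "0 \<le> B0" using B0[OF x] by linarith
  have I0: "I 0 \<le> B0"
  proof -
    have "I 0 \<le> (\<integral>x. B0 \<partial>\<mu>)" unfolding I_def U_def
      by (rule Bochner_Integration.integral_mono) (use B0 in \<open>auto intro!: intX_cont u0 simp: spX abs_le_iff\<close>)
    then show ?thesis using prob_space.prob_space[OF Pm] by simp
  qed
  have J0: "J 0 \<le> Cc + B0"
  proof -
    have pt: "vk k c \<mu> u0 y \<le> Cc + B0" if y: "y \<in> Y" for y
    proof -
      have cf: "continuous_on X (\<lambda>x. - c (x, y) - u0 x)" by (auto intro!: continuous_intros c_cont_x y u0)
      have bb: "\<And>x. x \<in> X \<Longrightarrow> \<bar>- c (x, y) - u0 x\<bar> \<le> Cc + B0"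
        using Cc(2)[OF _ y] B0 by (blast intro: abs_bnd2)
      show ?thesis unfolding vk_LSE
        by (rule prob_space.LSE_upper[OF Pm k measX[OF cf]]) (use bb in \<open>auto simp: spX abs_le_iff\<close>)
    qed
    have "J 0 \<le> (\<integral>y. Cc + B0 \<partial>\<nu>)" unfolding J_def U_def
      by (rule Bochner_Integration.integral_mono) (use pt in \<open>auto intro!: intY_cont vk_cont k u0 simp: spY\<close>)
    then show ?thesis using prob_space.prob_space[OF Pn] by simp
  qed
  have Ilow: "- 2 * Cc - B0 \<le> I m" for m using IJ[of m] J_dec[of m] J0 by linarith
  have Iup: "I m \<le> B0" for m using I_dec[of m] I0 by linarith
  show ?thesis
  proof (cases m)
    case 0 then show ?thesis using B0[OF x] Cc(1) by simp
  next
    case (Suc n)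
    have osc: "U m x \<le> U m x' + 2 * Cc" if x': "x' \<in> X" and xx: "x \<in> X" for x x'
      unfolding Suc US
    proof (rule Sk_mod[OF k cU xx x'])
      fix y assume y: "y \<in> Y"
      show "c (x', y) \<le> c (x, y) + 2 * Cc" using Cc(2)[OF xx y] Cc(2)[OF x' y] by (simp add: abs_le_iff)
    qed
    have "U m x \<le> (\<integral>x'. U m x' + 2 * Cc \<partial>\<mu>)"
    proof -
      have "(\<integral>x'. U m x \<partial>\<mu>) \<le> (\<integral>x'. U m x' + 2 * Cc \<partial>\<mu>)"
        by (rule Bochner_Integration.integral_mono) (use osc x in \<open>auto intro!: intX_cont cU continuous_intros simp: spX\<close>)
      then show ?thesis using prob_space.prob_space[OF Pm] by simp
    qed
    also have "\<dots> = I m + 2 * Cc" unfolding I_def using intX_cont[OF cU] intcX prob_space.prob_space[OF Pm]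
      by (subst Bochner_Integration.integral_add) auto
    finally have up: "U m x \<le> I m + 2 * Cc" .
    have "(\<integral>x'. U m x' - 2 * Cc \<partial>\<mu>) \<le> U m x"
    proof -
      have "(\<integral>x'. U m x' - 2 * Cc \<partial>\<mu>) \<le> (\<integral>x'. U m x \<partial>\<mu>)"
      proof (rule Bochner_Integration.integral_mono)
        fix x' assume "x' \<in> space \<mu>"
        then have "x' \<in> X" by (simp add: spX)
        then show "U m x' - 2 * Cc \<le> U m x" using osc[OF x \<open>x' \<in> X\<close>] by linarith
      qed (auto intro!: intX_cont cU continuous_intros)
      then show ?thesis using prob_space.prob_space[OF Pm] by simp
    qed
    moreover have "(\<integral>x'. U m x' - 2 * Cc \<partial>\<mu>) = I m - 2 * Cc" unfolding I_def using intX_cont[OF cU] intcX prob_space.prob_space[OF Pm]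
      by (subst Bochner_Integration.integral_diff) auto
    ultimately have lo: "I m - 2 * Cc \<le> U m x" by simp
    show ?thesis using up lo Ilow[of m] Iup[of m] Cc(1) unfolding U_def by (simp add: abs_le_iff)
  qed
qed

end

context sk_setting
begin

lemma ctrans'_mod:
  assumes g: "\<And>y. y \<in> Y \<Longrightarrow> \<bar>g y\<bar> \<le> B" and x: "x \<in> X" "x' \<in> X"
    and le: "\<And>y. y \<in> Y \<Longrightarrow> c (x', y) \<le> c (x, y) + e"
  shows "ctrans' Y c g x \<le> ctrans' Y c g x' + e"
  unfolding ctrans'_def
proof (rule SUP_shift[OF Yne, where B="Cc + B"])
  fix y assume y: "y \<in> Y"
  show "\<bar>- c (x', y) - g y\<bar> \<le> Cc + B" by (intro abs_bnd2 Cc(2)[OF x(2) y] g[OF y])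
  show "- c (x, y) - g y \<le> - c (x', y) - g y + e" using le[OF y] by linarith
qed

lemma ctrans'_cont:
  assumes g: "\<And>y. y \<in> Y \<Longrightarrow> \<bar>g y\<bar> \<le> B"
  shows "continuous_on X (ctrans' Y c g)"
  unfolding continuous_on_iff
proof (intro ballI allI impI)
  fix x e assume x: "x \<in> X" and e: "(0::real) < e"
  obtain d where d: "d > 0"
    "\<And>x x' y. x \<in> X \<Longrightarrow> x' \<in> X \<Longrightarrow> y \<in> Y \<Longrightarrow> dist x x' < d \<Longrightarrow> \<bar>c (x, y) - c (x', y)\<bar> < e/2"
    using c_unif[of "e/2"] e by (metis half_gt_zero)
  show "\<exists>d>0. \<forall>x'\<in>X. dist x' x < d \<longrightarrow> dist (ctrans' Y c g x') (ctrans' Y c g x) < e"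
  proof (intro exI[of _ d] conjI ballI impI)
    fix x' assume x': "x' \<in> X" "dist x' x < d"
    have cl: "\<And>y. y \<in> Y \<Longrightarrow> \<bar>c (x', y) - c (x, y)\<bar> < e/2" using d(2)[OF x'(1) x _ x'(2)] by blast
    have "ctrans' Y c g x' \<le> ctrans' Y c g x + e/2"
      by (rule ctrans'_mod[OF g x'(1) x]) (auto intro: abs_lt_le2[OF cl])
    moreover have "ctrans' Y c g x \<le> ctrans' Y c g x' + e/2"
      by (rule ctrans'_mod[OF g x x'(1)]) (auto intro: abs_lt_le1[OF cl])
    ultimately show "dist (ctrans' Y c g x') (ctrans' Y c g x) < e"
      using e by (simp add: dist_real_def abs_le_iff)
  qed (use d in auto)
qed

lemma Sk_le_ctrans:
  assumes k: "k > 0" and u: "continuous_on X u" and x: "x \<in> X"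
  shows "Sk k c \<mu> \<nu> u x \<le> ctrans' Y c (vk k c \<mu> u) x"
proof -
  let ?v = "vk k c \<mu> u"
  have cv: "continuous_on Y ?v" by (rule vk_cont[OF k u])
  obtain Bv where Bv: "\<And>y. y \<in> Y \<Longrightarrow> \<bar>?v y\<bar> \<le> Bv" using cont_bnd[OF cv cY] by blast
  have cf: "continuous_on Y (\<lambda>y. - c (x, y) - ?v y)" by (auto intro!: continuous_intros c_cont_y x cv)
  have fb: "\<And>y. y \<in> Y \<Longrightarrow> \<bar>- c (x, y) - ?v y\<bar> \<le> Cc + Bv" by (intro abs_bnd2 Cc(2)[OF x] Bv)
  show ?thesis unfolding Sk_LSE
  proof (rule prob_space.LSE_upper[OF Pn k measY[OF cf]])
    fix y assume "y \<in> space \<nu>" then have y: "y \<in> Y" by (simp add: spY)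
    show "\<bar>- c (x, y) - ?v y\<bar> \<le> Cc + Bv" by (rule fb[OF y])
    show "- c (x, y) - ?v y \<le> ctrans' Y c ?v x"
      unfolding ctrans'_def by (rule SUP_ge[where g="\<lambda>y. - c (x, y) - ?v y", OF y fb])
  qed
qed

lemma ballY_sets: "ball y r \<inter> Y \<in> sets \<nu>"
  unfolding sY sets_restrict_space by (auto simp: image_iff intro!: bexI[of _ "ball y r"])

end

locale sk_pos = sk_setting +
  assumes pos: "\<And>r. r > 0 \<Longrightarrow> \<exists>p>0. \<forall>y\<in>Y. p \<le> measure \<nu> (ball y r \<inter> Y)"
begin

lemma Sk_approx:
  assumes e: "e > 0"
  obtains K where "K > 0"
    "\<And>k u x. K \<le> k \<Longrightarrow> continuous_on X (u::'a \<Rightarrow> real) \<Longrightarrow> x \<in> X \<Longrightarrow> ctrans' Y c (vk k c \<mu> u) x - e \<le> Sk k c \<mu> \<nu> u x"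
proof -
  define e4 where "e4 = e / 4"
  have e4: "e4 > 0" using e by (simp add: e4_def)
  obtain d where d: "d > 0"
    "\<And>x x' y. x \<in> X \<Longrightarrow> x' \<in> X \<Longrightarrow> y \<in> Y \<Longrightarrow> dist x x' < d \<Longrightarrow> \<bar>c (x, y) - c (x', y)\<bar> < e4"
    "\<And>x y y'. x \<in> X \<Longrightarrow> y \<in> Y \<Longrightarrow> y' \<in> Y \<Longrightarrow> dist y y' < d \<Longrightarrow> \<bar>c (x, y) - c (x, y')\<bar> < e4"
    using c_unif[OF e4] by metis
  obtain p where p: "p > 0" "\<And>y. y \<in> Y \<Longrightarrow> p \<le> measure \<nu> (ball y d \<inter> Y)"
    using pos[OF d(1)] by blast
  obtain y00 where "y00 \<in> Y" using Yne by blast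
  have p1: "p \<le> 1" using p(2)[OF \<open>y00 \<in> Y\<close>] prob_space.prob_le_1[OF Pn] by (meson order_trans)
  define K where "K = max 1 (- ln p / e4)"
  show ?thesis
  proof (rule that)
    show "K > 0" unfolding K_def by simp
    fix k and u :: "'a \<Rightarrow> real" and x assume kK: "K \<le> k" and u: "continuous_on X u" and x: "x \<in> X"
    have k: "k > 0" using kK unfolding K_def by simp
    let ?v = "vk k c \<mu> u"
    have cv: "continuous_on Y ?v" by (rule vk_cont[OF k u])
    obtain Bv where Bv: "\<And>y. y \<in> Y \<Longrightarrow> \<bar>?v y\<bar> \<le> Bv" using cont_bnd[OF cv cY] by blast
    define f where "f y = - c (x, y) - ?v y" for y
    have cf: "continuous_on Y f" unfolding f_def by (auto intro!: continuous_intros c_cont_y x cv)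
    have fb: "\<And>y. y \<in> Y \<Longrightarrow> \<bar>f y\<bar> \<le> Cc + Bv" unfolding f_def by (intro abs_bnd2 Cc(2)[OF x] Bv)
    define s where "s = ctrans' Y c ?v x"
    have s_def': "s = (SUP y\<in>Y. f y)" unfolding s_def ctrans'_def f_def ..
    have bdd: "bdd_above (f ` Y)" using fb by (intro bdd_aboveI2[where M="Cc + Bv"]) (auto simp: abs_le_iff)
    have "s - e4 < (SUP y\<in>Y. f y)" using e4 s_def' by simp
    then obtain y0 where y0: "y0 \<in> Y" "s - e4 < f y0"
      using less_cSUP_iff[OF Yne bdd] by blast
    have lowA: "s - 3 * e4 \<le> f y" if yA: "y \<in> ball y0 d \<inter> Y" for y
    proof -
      have y: "y \<in> Y" and dy: "dist y0 y < d" using yA by auto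
      have c1: "\<bar>c (x, y0) - c (x, y)\<bar> < e4" by (rule d(3)[OF x y0(1) y dy])
      have cl: "\<And>x'. x' \<in> X \<Longrightarrow> \<bar>c (x', y0) - c (x', y)\<bar> < e4" using d(3)[OF _ y0(1) y dy] by blast
      have "?v y \<le> ?v y0 + e4"
        by (rule vk_mod[OF k u y y0(1)]) (erule abs_lt_le1[OF cl])
      then show ?thesis using y0(2) c1 unfolding f_def by (simp add: abs_less_iff)
    qed
    have "(s - 3 * e4) + ln p / k \<le> LSE k \<nu> f"
    proof (rule prob_space.LSE_lower[OF Pn k measY[OF cf]])
      show "\<And>y. y \<in> space \<nu> \<Longrightarrow> \<bar>f y\<bar> \<le> Cc + Bv" using fb by (simp add: spY)
      show "ball y0 d \<inter> Y \<in> sets \<nu>" by (rule ballY_sets)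
      show "0 < p" by (rule p(1))
      show "p \<le> measure \<nu> (ball y0 d \<inter> Y)" by (rule p(2)[OF y0(1)])
      show "\<And>y. y \<in> ball y0 d \<inter> Y \<Longrightarrow> s - 3 * e4 \<le> f y" by (rule lowA)
    qed
    moreover have "- e4 \<le> ln p / k"
    proof -
      have "- ln p / e4 \<le> k" using kK unfolding K_def by simp
      then have "(- ln p / e4) * e4 \<le> k * e4" using e4 by (intro mult_right_mono) auto
      then have "- ln p \<le> k * e4" using e4 by simp
      then have "- e4 * k \<le> ln p" by (simp add: algebra_simps)
      then show ?thesis using k by (simp add: le_divide_eq)
    qed
    ultimately have "s - 4 * e4 \<le> LSE k \<nu> f" by linarith
    moreover have "LSE k \<nu> f = Sk k c \<mu> \<nu> u x" unfolding Sk_LSE f_def ..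
    ultimately show "ctrans' Y c ?v x - e \<le> Sk k c \<mu> \<nu> u x" unfolding s_def e4_def by simp
  qed
qed

end

lemma lborel_cball_pos: "r > 0 \<Longrightarrow> 0 < emeasure lborel (cball (c::'x::euclidean_space) r)"
proof -
  assume r: "r > 0"
  have "emeasure lborel (cball c r) = ennreal (measure lborel (cball c r))"
    using emeasure_lborel_cball_finite[of c r] by (intro emeasure_eq_ennreal_measure) auto
  then show ?thesis using content_cball_pos[OF r, of c] by simp
qed

lemma manifold_ball_pos:
  fixes Y :: "'b::euclidean_space set" and \<nu> :: "'b measure"
  assumes man: "smooth_manifold TYPE('n::finite) Y" and vf: "volume_form TYPE('n) Y \<nu>"
    and P: "prob_space \<nu>" and y: "y \<in> Y" and r: "r > 0"
  shows "0 < measure \<nu> (ball y r \<inter> Y)"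
proof -
  obtain \<psi> :: "real^'n \<Rightarrow> 'b" and V where ch: "chart Y \<psi> V" and yV: "y \<in> \<psi> ` V"
    using man y unfolding smooth_manifold_def by blast
  obtain b where b: "b \<in> V" "\<psi> b = y" using yV by blast
  have oV: "open V" and ci: "cinf_on V \<psi>" and sub: "\<psi> ` V \<subseteq> Y"
    using ch unfolding chart_def by auto
  have cpsi: "continuous_on V \<psi>"
    using ci unfolding cinf_on_def by (metis empty_subsetI list.set(1) pder.simps(1))
  obtain \<rho> :: "real^'n \<Rightarrow> real" where rho: "cinf_on V \<rho>" "\<And>a. a \<in> V \<Longrightarrow> \<rho> a > 0"
    "\<And>B. B \<in> sets lborel \<Longrightarrow> B \<subseteq> V \<Longrightarrow> emeasure \<nu> (\<psi> ` B) = set_nn_integral lborel B (\<lambda>a. ennreal (\<rho> a))"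
    using vf ch unfolding volume_form_def by metis
  have crho: "continuous_on V \<rho>"
    using rho(1) unfolding cinf_on_def by (metis empty_subsetI list.set(1) pder.simps(1))
  obtain e1 where e1: "e1 > 0" "\<And>b'. b' \<in> V \<Longrightarrow> dist b' b < e1 \<Longrightarrow> dist (\<psi> b') (\<psi> b) < r"
    using cpsi b(1) r unfolding continuous_on_iff by metis
  obtain e2 where e2: "e2 > 0" "ball b e2 \<subseteq> V" using oV b(1) open_contains_ball by blast
  define e where "e = min e1 e2"
  have e: "e > 0" using e1 e2 by (simp add: e_def)
  have BV: "ball b e \<subseteq> V" using e2 by (auto simp: e_def)
  have img: "\<psi> ` ball b e \<subseteq> ball y r \<inter> Y"
  proof
    fix z assume "z \<in> \<psi> ` ball b e"
    then obtain b' where b': "b' \<in> ball b e" "z = \<psi> b'" by blast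
    have "b' \<in> V" using b' BV by auto
    moreover have "dist b' b < e1" using b' by (auto simp: e_def dist_commute)
    ultimately have "dist (\<psi> b') (\<psi> b) < r" by (rule e1(2))
    then show "z \<in> ball y r \<inter> Y" using b' b sub \<open>b' \<in> V\<close> by (auto simp: dist_commute)
  qed
  define K where "K = cball b (e/2)"
  have KB: "K \<subseteq> ball b e" using e by (auto simp: K_def)
  have cK: "compact K" "K \<noteq> {}" using e by (auto simp: K_def)
  have crK: "continuous_on K \<rho>" using crho KB BV by (meson continuous_on_subset order_trans)
  obtain a0 where a0: "a0 \<in> K" "\<And>a. a \<in> K \<Longrightarrow> \<rho> a0 \<le> \<rho> a"
    using continuous_attains_inf[OF cK crK] by blast
  define m where "m = \<rho> a0"
  have m: "m > 0" using rho(2) a0(1) KB BV unfolding m_def by auto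
  have "ennreal m * emeasure lborel K = (\<integral>\<^sup>+ a. ennreal m * indicator K a \<partial>lborel)"
    by (simp add: K_def nn_integral_cmult_indicator)
  also have "\<dots> \<le> (\<integral>\<^sup>+ a. ennreal (\<rho> a) * indicator (ball b e) a \<partial>lborel)"
  proof (rule nn_integral_mono)
    fix a
    show "ennreal m * indicator K a \<le> ennreal (\<rho> a) * indicator (ball b e) a"
    proof (cases "a \<in> K")
      case True
      then have "a \<in> ball b e" using KB by auto
      then show ?thesis using True a0(2)[OF True] by (simp add: m_def indicator_def ennreal_leI)
    qed (simp add: indicator_def)
  qed
  also have "\<dots> = emeasure \<nu> (\<psi> ` ball b e)"
    using rho(3)[of "ball b e"] BV by simp
  finally have le1: "ennreal m * emeasure lborel K \<le> emeasure \<nu> (\<psi> ` ball b e)" .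
  have "0 < ennreal m * emeasure lborel K"
    using m lborel_cball_pos[of "e/2" b] e unfolding K_def by (simp add: ennreal_zero_less_mult_iff)
  then have pos: "0 < emeasure \<nu> (\<psi> ` ball b e)" using le1 by (meson less_le_trans)
  then have meas: "\<psi> ` ball b e \<in> sets \<nu>" using emeasure_notin_sets by force
  have sY: "sets \<nu> = sets (restrict_space borel Y)" using vf unfolding volume_form_def by blast
  have bY: "ball y r \<inter> Y \<in> sets \<nu>"
    unfolding sY sets_restrict_space by (auto simp: image_iff intro!: bexI[of _ "ball y r"])
  have "emeasure \<nu> (\<psi> ` ball b e) \<le> emeasure \<nu> (ball y r \<inter> Y)"
    by (rule emeasure_mono[OF img bY])
  then have "0 < emeasure \<nu> (ball y r \<inter> Y)" using pos by (meson less_le_trans)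
  then show ?thesis
    using finite_measure.emeasure_eq_measure[OF prob_space.finite_measure[OF P]] by simp
qed

lemma manifold_pos:
  fixes Y :: "'b::euclidean_space set" and \<nu> :: "'b measure"
  assumes cY: "compact Y" and man: "smooth_manifold TYPE('n::finite) Y" and vf: "volume_form TYPE('n) Y \<nu>"
    and P: "prob_space \<nu>" and Yne: "Y \<noteq> {}" and r: "r > 0"
  shows "\<exists>p>0. \<forall>y\<in>Y. p \<le> measure \<nu> (ball y r \<inter> Y)"
proof -
  have sY: "sets \<nu> = sets (restrict_space borel Y)" using vf unfolding volume_form_def by blast
  have bY: "\<And>y r. ball y r \<inter> Y \<in> sets \<nu>"
    unfolding sY sets_restrict_space by (auto simp: image_iff intro!: bexI[of _ "ball _ _"])
  obtain C where C: "C \<subseteq> Y" "finite C" "Y \<subseteq> (\<Union>z\<in>C. ball z (r/2))"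
    using compactE_image[OF cY, of Y "\<lambda>z. ball z (r/2)"] r by (metis centre_in_ball half_gt_zero open_ball UN_I subsetI)
  have Cne: "C \<noteq> {}" using C(3) Yne by auto
  define p where "p = Min ((\<lambda>z. measure \<nu> (ball z (r/2) \<inter> Y)) ` C)"
  have ppos: "p > 0" unfolding p_def
    using C Cne manifold_ball_pos[OF man vf P, of _ "r/2"] r by (subst Min_gr_iff) auto
  show ?thesis
  proof (intro exI[of _ p] conjI ballI ppos)
    fix y assume y: "y \<in> Y"
    then obtain z where z: "z \<in> C" "y \<in> ball z (r/2)" using C(3) by blast
    have "p \<le> measure \<nu> (ball z (r/2) \<inter> Y)" unfolding p_def using z C(2) by (intro Min_le) auto
    also have "\<dots> \<le> measure \<nu> (ball y r \<inter> Y)"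
    proof (rule finite_measure.finite_measure_mono[OF prob_space.finite_measure[OF P] _ bY])
      show "ball z (r/2) \<inter> Y \<subseteq> ball y r \<inter> Y"
      proof
        fix x assume x: "x \<in> ball z (r/2) \<inter> Y"
        have "dist y x \<le> dist y z + dist z x" by (rule dist_triangle)
        moreover have "dist y z < r/2" "dist z x < r/2" using z(2) x by (auto simp: dist_commute)
        ultimately show "x \<in> ball y r \<inter> Y" using x by auto
      qed
    qed
    finally show "p \<le> measure \<nu> (ball y r \<inter> Y)" .
  qed
qed

context sk_pos
begin

lemma u0_props:
  assumes cu0: "c_convex X Y c u0"
  obtains B0 where "\<And>x. x \<in> X \<Longrightarrow> \<bar>u0 x\<bar> \<le> B0" "continuous_on X u0"
    "\<And>x x' e. x \<in> X \<Longrightarrow> x' \<in> X \<Longrightarrow> (\<And>y. y \<in> Y \<Longrightarrow> c (x', y) \<le> c (x, y) + e) \<Longrightarrow> u0 x \<le> u0 x' + e"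
proof -
  obtain L where L: "\<And>x. x \<in> X \<Longrightarrow> L \<le> u0 x"
    using cu0 unfolding c_convex_def bdd_below_def by auto
  have eq: "\<And>x. x \<in> X \<Longrightarrow> ctrans' Y c (ctrans X c u0) x = u0 x"
    using cu0 unfolding c_convex_def by auto
  obtain x0 where x0: "x0 \<in> X" using Xne by blast
  define Gb where "Gb = Cc + \<bar>L\<bar> + \<bar>u0 x0\<bar>"
  have gb: "\<bar>ctrans X c u0 y\<bar> \<le> Gb" if y: "y \<in> Y" for y
  proof -
    have up: "ctrans X c u0 y \<le> Cc - L"
      unfolding ctrans_def
    proof (rule cSUP_least[OF Xne])
      fix x assume x: "x \<in> X"
      show "- c (x, y) - u0 x \<le> Cc - L" using Cc(2)[OF x y] L[OF x] by (simp add: abs_le_iff)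
    qed
    have bdd: "bdd_above ((\<lambda>x. - c (x, y) - u0 x) ` X)"
    proof (rule bdd_aboveI2[where M="Cc - L"])
      fix x assume x: "x \<in> X"
      show "- c (x, y) - u0 x \<le> Cc - L" using Cc(2)[OF x y] L[OF x] by (simp add: abs_le_iff)
    qed
    have lo: "- c (x0, y) - u0 x0 \<le> ctrans X c u0 y"
      unfolding ctrans_def by (rule cSUP_upper[OF x0 bdd])
    show ?thesis using up lo Cc(2)[OF x0 y] abs_ge_minus_self[of L] abs_ge_self[of "u0 x0"] abs_ge_self[of L]
      unfolding Gb_def by (simp add: abs_le_iff)
  qed
  show ?thesis
  proof (rule that)
    fix x assume x: "x \<in> X"
    show "\<bar>u0 x\<bar> \<le> Cc + Gb" using ctrans'_bnd[where X=X and Y=Y and c=c and Cc=Cc and v="ctrans X c u0" and B=Gb, OF Yne Cc(2) gb x] eq[OF x] by simp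
  next
    have cg: "continuous_on X (ctrans' Y c (ctrans X c u0))"
      by (rule ctrans'_cont[where g="ctrans X c u0" and B=Gb]) (rule gb)
    have "continuous_on X u0 = continuous_on X (ctrans' Y c (ctrans X c u0))"
      by (rule continuous_on_cong) (auto simp: eq)
    then show "continuous_on X u0" using cg by simp
  next
    fix x x' e assume x: "x \<in> X" "x' \<in> X" and le: "\<And>y. y \<in> Y \<Longrightarrow> c (x', y) \<le> c (x, y) + e"
    show "u0 x \<le> u0 x' + e" using ctrans'_mod[where g="ctrans X c u0" and B=Gb, OF gb x le] eq x by simp
  qed
qed

end

locale sk_main = sk_pos +
  fixes u0 :: "'a \<Rightarrow> real"
  assumes cu0: "c_convex X Y c u0"
begin

definition "B0 = (SOME B. \<forall>x\<in>X. \<bar>u0 x\<bar> \<le> B)"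

lemma u0_ex: "\<exists>B. \<forall>x\<in>X. \<bar>u0 x\<bar> \<le> B"
proof (rule u0_props[OF cu0])
  fix B assume B: "\<And>x. x \<in> X \<Longrightarrow> \<bar>u0 x\<bar> \<le> B"
  show ?thesis using B by blast
qed

lemma B0: "x \<in> X \<Longrightarrow> \<bar>u0 x\<bar> \<le> B0"
proof -
  assume x: "x \<in> X"
  have "\<forall>x\<in>X. \<bar>u0 x\<bar> \<le> B0" unfolding B0_def by (rule someI_ex[OF u0_ex])
  then show ?thesis using x by (rule bspec)
qed

lemma u0c: "continuous_on X u0"
proof (rule u0_props[OF cu0])
  assume "continuous_on X u0" then show ?thesis .
qed

lemma u0m: "x \<in> X \<Longrightarrow> x' \<in> X \<Longrightarrow> (\<And>y. y \<in> Y \<Longrightarrow> c (x', y) \<le> c (x, y) + e) \<Longrightarrow> u0 x \<le> u0 x' + e"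
proof (rule u0_props[OF cu0])
  assume m: "\<And>x x' e. x \<in> X \<Longrightarrow> x' \<in> X \<Longrightarrow> (\<And>y. y \<in> Y \<Longrightarrow> c (x', y) \<le> c (x, y) + e) \<Longrightarrow> u0 x \<le> u0 x' + e"
  show "x \<in> X \<Longrightarrow> x' \<in> X \<Longrightarrow> (\<And>y. y \<in> Y \<Longrightarrow> c (x', y) \<le> c (x, y) + e) \<Longrightarrow> u0 x \<le> u0 x' + e"
    by (rule m)
qed

definition "Cb = B0 + 4 * Cc"

lemma F_bnd: "k > 0 \<Longrightarrow> x \<in> X \<Longrightarrow> \<bar>(Sk k c \<mu> \<nu> ^^ m) u0 x\<bar> \<le> Cb"
  unfolding Cb_def by (rule iter_bound[OF _ u0c B0])

lemma F_mod:
  assumes k: "k > 0" and x: "x \<in> X" "x' \<in> X" and le: "\<And>y. y \<in> Y \<Longrightarrow> c (x', y) \<le> c (x, y) + e"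
  shows "(Sk k c \<mu> \<nu> ^^ m) u0 x \<le> (Sk k c \<mu> \<nu> ^^ m) u0 x' + e"
proof (cases m)
  case 0 then show ?thesis using u0m[OF x le] by simp
next
  case (Suc n)
  then show ?thesis using Sk_mod[OF k iter_cont[OF k u0c] x le] by simp
qed

lemma cc_approx:
  assumes w: "\<And>x. x \<in> X \<Longrightarrow> \<bar>w x\<bar> \<le> Bw"
    and approx: "\<And>\<eta>. \<eta> > 0 \<Longrightarrow> \<exists>g Bg. (\<forall>x\<in>X. \<bar>g x\<bar> \<le> Bg) \<and> (\<forall>x\<in>X. g x \<le> ctrans' Y c (ctrans X c g) x)
        \<and> (\<forall>x\<in>X. \<bar>w x - g x\<bar> \<le> \<eta>)"
    and x: "x \<in> X"
  shows "w x \<le> ctrans' Y c (ctrans X c w) x"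
proof (rule field_le_epsilon)
  fix \<epsilon> :: real assume \<epsilon>: "\<epsilon> > 0"
  have h: "\<epsilon>/2 > 0" using \<epsilon> by simp
  from approx[OF h] obtain g Bg where g1: "\<forall>x\<in>X. \<bar>g x\<bar> \<le> Bg"
    and g2: "\<forall>x\<in>X. g x \<le> ctrans' Y c (ctrans X c g) x" and g3: "\<forall>x\<in>X. \<bar>w x - g x\<bar> \<le> \<epsilon>/2"
    by blast
  have g: "\<And>x. x \<in> X \<Longrightarrow> \<bar>g x\<bar> \<le> Bg" "\<And>x. x \<in> X \<Longrightarrow> g x \<le> ctrans' Y c (ctrans X c g) x"
    "\<And>x. x \<in> X \<Longrightarrow> \<bar>w x - g x\<bar> \<le> \<epsilon>/2" using g1 g2 g3 by auto
  have "ctrans' Y c (ctrans X c g) x \<le> ctrans' Y c (ctrans X c w) x + \<epsilon>/2"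
  proof (rule cc_mono[where f=g and g=w and B=Bg and B'=Bw, OF g(1) w _ x])
    fix x assume "x \<in> X" then show "g x \<le> w x + \<epsilon>/2" using g(3)[of x] unfolding abs_le_iff by linarith
  qed
  then show "w x \<le> ctrans' Y c (ctrans X c w) x + \<epsilon>"
    using g(2)[OF x] g(3)[OF x] unfolding abs_le_iff by linarith
qed

lemma Lset_elem:
  assumes "w \<in> Lset X c \<mu> \<nu> u0 t"
  shows "continuous_on X w" "\<And>x. x \<in> X \<Longrightarrow> \<bar>w x\<bar> \<le> Cb" "c_convex X Y c w"
proof -
  obtain K M where cw: "continuous_on X w" and K: "filterlim K at_top sequentially"
    and ul: "uniform_limit X (\<lambda>j. (Sk (K j) c \<mu> \<nu> ^^ M j) u0) w sequentially"
    using assms unfolding Lset_def by blast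
  show "continuous_on X w" by (rule cw)
  have pick: "\<exists>j. Z \<le> K j \<and> (\<forall>x\<in>X. dist ((Sk (K j) c \<mu> \<nu> ^^ M j) u0 x) (w x) < \<eta>)" if "\<eta> > 0" for Z \<eta>
  proof -
    have "eventually (\<lambda>j. Z \<le> K j) sequentially" using K by (simp add: filterlim_at_top)
    moreover have "eventually (\<lambda>j. \<forall>x\<in>X. dist ((Sk (K j) c \<mu> \<nu> ^^ M j) u0 x) (w x) < \<eta>) sequentially"
      by (rule uniform_limitD[OF ul that])
    ultimately have "eventually (\<lambda>j. Z \<le> K j \<and> (\<forall>x\<in>X. dist ((Sk (K j) c \<mu> \<nu> ^^ M j) u0 x) (w x) < \<eta>)) sequentially"
      by (rule eventually_conj)
    then obtain N where "\<forall>n\<ge>N. Z \<le> K n \<and> (\<forall>x\<in>X. dist ((Sk (K n) c \<mu> \<nu> ^^ M n) u0 x) (w x) < \<eta>)"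
      unfolding eventually_sequentially by blast
    then show ?thesis by blast
  qed
  show wb: "\<bar>w x\<bar> \<le> Cb" if x: "x \<in> X" for x
  proof (rule field_le_epsilon)
    fix \<eta> :: real assume \<eta>: "\<eta> > 0"
    obtain j where j: "1 \<le> K j" "\<forall>x\<in>X. dist ((Sk (K j) c \<mu> \<nu> ^^ M j) u0 x) (w x) < \<eta>"
      using pick[OF \<eta>, of 1] by blast
    have "\<bar>(Sk (K j) c \<mu> \<nu> ^^ M j) u0 x\<bar> \<le> Cb" by (rule F_bnd) (use j x in auto)
    then show "\<bar>w x\<bar> \<le> Cb + \<eta>" using j(2) x by (auto simp: dist_real_def abs_le_iff abs_less_iff)
  qed
  have approx: "\<exists>g Bg. (\<forall>x\<in>X. \<bar>g x\<bar> \<le> Bg) \<and> (\<forall>x\<in>X. g x \<le> ctrans' Y c (ctrans X c g) x)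
        \<and> (\<forall>x\<in>X. \<bar>w x - g x\<bar> \<le> \<eta>)" if \<eta>: "\<eta> > 0" for \<eta>
  proof -
    have h2: "\<eta>/2 > 0" using \<eta> by simp
    obtain Ka where Ka: "Ka > 0"
      "\<And>k u x. Ka \<le> k \<Longrightarrow> continuous_on X (u::'a \<Rightarrow> real) \<Longrightarrow> x \<in> X \<Longrightarrow> ctrans' Y c (vk k c \<mu> u) x - \<eta>/2 \<le> Sk k c \<mu> \<nu> u x"
      using Sk_approx[OF h2] by blast
    obtain j where j: "Ka \<le> K j" "\<forall>x\<in>X. dist ((Sk (K j) c \<mu> \<nu> ^^ M j) u0 x) (w x) < \<eta>/2"
      using pick[of "\<eta>/2" Ka] \<eta> by auto
    define k where "k = K j"
    have k: "k > 0" using j(1) Ka(1) unfolding k_def by linarith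
    show ?thesis
    proof (cases "M j")
      case 0
      show ?thesis
      proof (intro exI conjI ballI)
        fix x assume x: "x \<in> X"
        show "\<bar>u0 x\<bar> \<le> B0" by (rule B0[OF x])
        show "u0 x \<le> ctrans' Y c (ctrans X c u0) x" using cu0 x unfolding c_convex_def by simp
        have "\<bar>(Sk (K j) c \<mu> \<nu> ^^ M j) u0 x - w x\<bar> < \<eta>/2" using j(2) x by (simp add: dist_real_def)
        then have "\<bar>u0 x - w x\<bar> < \<eta>/2" using 0 by simp
        then show "\<bar>w x - u0 x\<bar> \<le> \<eta>" unfolding abs_le_iff abs_less_iff by linarith
      qed
    next
      case (Suc n)
      define u where "u = (Sk k c \<mu> \<nu> ^^ n) u0"
      have cu: "continuous_on X u" unfolding u_def by (rule iter_cont[OF k u0c])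
      have fj: "(Sk (K j) c \<mu> \<nu> ^^ M j) u0 = Sk k c \<mu> \<nu> u" unfolding u_def k_def Suc by simp
      define v where "v = vk k c \<mu> u"
      have cv: "continuous_on Y v" unfolding v_def by (rule vk_cont[OF k cu])
      obtain Bv where Bv: "\<And>y. y \<in> Y \<Longrightarrow> \<bar>v y\<bar> \<le> Bv" using cont_bnd[OF cv cY] by blast
      show ?thesis
      proof (intro exI conjI ballI)
        fix x assume x: "x \<in> X"
        show "\<bar>ctrans' Y c v x\<bar> \<le> Cc + Bv"
          by (rule ctrans'_bnd[where X=X and Y=Y and c=c and Cc=Cc and v=v and B=Bv, OF Yne Cc(2) Bv x])
        show "ctrans' Y c v x \<le> ctrans' Y c (ctrans X c (ctrans' Y c v)) x"
          by (rule ctrans'_cc[where v=v and B=Bv, OF Bv x])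
        have a1: "ctrans' Y c v x - \<eta>/2 \<le> Sk k c \<mu> \<nu> u x"
          using Ka(2)[OF _ cu x] j(1) unfolding v_def k_def by simp
        have a2: "Sk k c \<mu> \<nu> u x \<le> ctrans' Y c v x"
          unfolding v_def by (rule Sk_le_ctrans[OF k cu x])
        have a3: "\<bar>Sk k c \<mu> \<nu> u x - w x\<bar> < \<eta>/2" using j(2) x fj by (simp add: dist_real_def)
        show "\<bar>w x - ctrans' Y c v x\<bar> \<le> \<eta>" using a1 a2 a3 unfolding abs_le_iff abs_less_iff by linarith
      qed
    qed
  qed
  show "c_convex X Y c w"
    unfolding c_convex_def
  proof (intro conjI ballI)
    show "bdd_below (w ` X)"
    proof (rule bdd_belowI2[where m="- Cb"])
      fix x assume "x \<in> X" then show "- Cb \<le> w x" using wb[of x] unfolding abs_le_iff by linarith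
    qed
    fix x assume x: "x \<in> X"
    have "ctrans' Y c (ctrans X c w) x \<le> w x" by (rule cc_le[OF wb x])
    moreover have "w x \<le> ctrans' Y c (ctrans X c w) x" by (rule cc_approx[OF wb approx x])
    ultimately show "ctrans' Y c (ctrans X c w) x = w x" by simp
  qed
qed

end

context sk_main
begin

lemma ratio_lim:
  assumes t: "t \<ge> 0"
  shows "(\<lambda>n. real (nat \<lfloor>t * (real n + 1)\<rfloor>) / (real n + 1)) \<longlonglongrightarrow> t"
proof (rule tendsto_sandwich[where f="\<lambda>n. t - inverse (real (Suc n))" and h="\<lambda>n. t"])
  have bnds: "t - inverse (real (Suc n)) \<le> real (nat \<lfloor>t * (real n + 1)\<rfloor>) / (real n + 1)
      \<and> real (nat \<lfloor>t * (real n + 1)\<rfloor>) / (real n + 1) \<le> t" for n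
  proof -
    define y where "y = t * (real n + 1)"
    have y0: "0 \<le> y" using t by (simp add: y_def)
    have fl: "real (nat \<lfloor>t * (real n + 1)\<rfloor>) = of_int \<lfloor>t * (real n + 1)\<rfloor>" using y0 unfolding y_def by simp
    have c1: "of_int \<lfloor>y\<rfloor> \<le> y" "y < of_int \<lfloor>y\<rfloor> + 1" using floor_correct[of y] by auto
    have pos: "(0::real) < real n + 1" by simp
    have "of_int \<lfloor>y\<rfloor> / (real n + 1) \<le> y / (real n + 1)" using c1 pos by (intro divide_right_mono) auto
    moreover have "y / (real n + 1) = t" using pos by (simp add: y_def)
    moreover have "(y - 1) / (real n + 1) \<le> of_int \<lfloor>y\<rfloor> / (real n + 1)" using c1 pos by (intro divide_right_mono) auto
    moreover have "(y - 1) / (real n + 1) = t - inverse (real (Suc n))"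
      using pos by (simp add: y_def field_simps)
    ultimately show ?thesis using fl unfolding y_def by simp
  qed
  show "\<forall>\<^sub>F n in sequentially. t - inverse (real (Suc n)) \<le> real (nat \<lfloor>t * (real n + 1)\<rfloor>) / (real n + 1)"
    using bnds by simp
  show "\<forall>\<^sub>F n in sequentially. real (nat \<lfloor>t * (real n + 1)\<rfloor>) / (real n + 1) \<le> t"
    using bnds by simp
  show "(\<lambda>n. t - inverse (real (Suc n))) \<longlonglongrightarrow> t"
    using tendsto_diff[OF tendsto_const LIMSEQ_inverse_real_of_nat, of t] by simp
  show "(\<lambda>n. t) \<longlonglongrightarrow> t" by simp
qed

lemma Lset_ne:
  assumes t: "t \<ge> 0"
  shows "Lset X c \<mu> \<nu> u0 t \<noteq> {}"
proof -
  define kk :: "nat \<Rightarrow> real" where "kk n = real n + 1" for n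
  define mm where "mm n = nat \<lfloor>t * kk n\<rfloor>" for n
  define F where "F n = (Sk (kk n) c \<mu> \<nu> ^^ mm n) u0" for n
  have kkp: "kk n > 0" for n unfolding kk_def by simp
  have Fb: "\<And>n x. x \<in> X \<Longrightarrow> norm (F n x) \<le> Cb" unfolding F_def using F_bnd[OF kkp] by simp
  have eqc: "\<exists>d. 0 < d \<and> (\<forall>n y. y \<in> X \<and> norm (x - y) < d \<longrightarrow> norm (F n x - F n y) < e)"
    if x: "x \<in> X" and e: "0 < e" for x e
  proof -
    have h: "e/2 > 0" using e by simp
    obtain d where d: "d > 0"
      "\<And>x x' y. x \<in> X \<Longrightarrow> x' \<in> X \<Longrightarrow> y \<in> Y \<Longrightarrow> dist x x' < d \<Longrightarrow> \<bar>c (x, y) - c (x', y)\<bar> < e/2"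
      using c_unif[OF h] by metis
    show ?thesis
    proof (intro exI[of _ d] conjI allI impI)
      show "d > 0" by (rule d(1))
      fix n y assume ny: "y \<in> X \<and> norm (x - y) < d"
      then have y: "y \<in> X" and dxy: "dist x y < d" by (auto simp: dist_norm)
      have cl: "\<And>y'. y' \<in> Y \<Longrightarrow> \<bar>c (x, y') - c (y, y')\<bar> < e/2" using d(2)[OF x y _ dxy] by blast
      have "F n x \<le> F n y + e/2" unfolding F_def
        by (rule F_mod[OF kkp x y]) (erule abs_lt_le2[OF cl])
      moreover have "F n y \<le> F n x + e/2" unfolding F_def
        by (rule F_mod[OF kkp y x]) (erule abs_lt_le1[OF cl])
      ultimately show "norm (F n x - F n y) < e" using e unfolding real_norm_def abs_less_iff by linarith
    qed
  qed
  obtain g r where g: "continuous_on X g" "strict_mono (r :: nat \<Rightarrow> nat)"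
    "\<And>e. 0 < e \<Longrightarrow> \<exists>N. \<forall>n x. n \<ge> N \<and> x \<in> X \<longrightarrow> norm (F (r n) x - g x) < e"
    using Arzela_Ascoli[OF cX Fb eqc] by blast
  have "g \<in> Lset X c \<mu> \<nu> u0 t"
    unfolding Lset_def
  proof (intro CollectI conjI exI)
    show "continuous_on X g" by (rule g(1))
    have "filterlim kk at_top sequentially"
      by (rule filterlim_at_top_mono[OF filterlim_real_sequentially]) (auto simp: kk_def)
    then show "filterlim (\<lambda>j. kk (r j)) at_top sequentially"
      by (rule filterlim_compose[OF _ filterlim_subseq[OF g(2)]])
    have "(\<lambda>n. real (mm n) / kk n) \<longlonglongrightarrow> t" unfolding mm_def kk_def by (rule ratio_lim[OF t])
    from LIMSEQ_subseq_LIMSEQ[OF this g(2)]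
    show "(\<lambda>j. real (mm (r j)) / kk (r j)) \<longlonglongrightarrow> t" by (simp add: comp_def)
    show "uniform_limit X (\<lambda>j. (Sk (kk (r j)) c \<mu> \<nu> ^^ mm (r j)) u0) g sequentially"
      unfolding uniform_limit_sequentially_iff
    proof (intro allI impI)
      fix e :: real assume e: "e > 0"
      obtain N where N: "\<forall>n x. n \<ge> N \<and> x \<in> X \<longrightarrow> norm (F (r n) x - g x) < e" using g(3)[OF e] by blast
      show "\<exists>N. \<forall>n\<ge>N. \<forall>x\<in>X. dist ((Sk (kk (r n)) c \<mu> \<nu> ^^ mm (r n)) u0 x) (g x) < e"
        using N unfolding F_def dist_norm by blast
    qed
  qed
  then show ?thesis by blast
qed

lemma u_lim_props:
  assumes t: "t \<ge> 0"
  shows "c_convex X Y c (u_lim X c \<mu> \<nu> u0 t) \<and> (\<forall>x\<in>X. \<bar>u_lim X c \<mu> \<nu> u0 t x\<bar> \<le> Cb)"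
proof -
  define L where "L = Lset X c \<mu> \<nu> u0 t"
  define U where "U = u_lim X c \<mu> \<nu> u0 t"
  have Lne: "L \<noteq> {}" unfolding L_def by (rule Lset_ne[OF t])
  have U: "\<And>x. U x = (SUP w\<in>L. w x)" unfolding U_def L_def u_lim_def ..
  have wb: "\<And>w x. w \<in> L \<Longrightarrow> x \<in> X \<Longrightarrow> \<bar>w x\<bar> \<le> Cb" unfolding L_def by (rule Lset_elem(2))
  have wc: "\<And>w. w \<in> L \<Longrightarrow> c_convex X Y c w" unfolding L_def by (rule Lset_elem(3))
  have Ub: "\<bar>U x\<bar> \<le> Cb" if x: "x \<in> X" for x
    unfolding U by (rule SUP_abs_bnd[OF Lne]) (rule wb[OF _ x])
  have "c_convex X Y c U"
    unfolding c_convex_def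
  proof (intro conjI ballI)
    show "bdd_below (U ` X)"
    proof (rule bdd_belowI2[where m="- Cb"])
      fix x assume "x \<in> X" then show "- Cb \<le> U x" using Ub[of x] unfolding abs_le_iff by linarith
    qed
    fix x assume x: "x \<in> X"
    have "ctrans' Y c (ctrans X c U) x \<le> U x" by (rule cc_le[OF Ub x])
    moreover have "U x \<le> ctrans' Y c (ctrans X c U) x"
      unfolding U[of x]
    proof (rule cSUP_least[OF Lne])
      fix w assume w: "w \<in> L"
      have "w x = ctrans' Y c (ctrans X c w) x" using wc[OF w] x unfolding c_convex_def by simp
      also have "\<dots> \<le> ctrans' Y c (ctrans X c U) x + 0"
      proof (rule cc_mono[where f=w and g=U and B=Cb and B'=Cb, OF _ Ub _ x])
        fix x' assume x': "x' \<in> X"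
        show "\<bar>w x'\<bar> \<le> Cb" by (rule wb[OF w x'])
        have "w x' \<le> (SUP w\<in>L. w x')" by (rule SUP_ge[where g="\<lambda>w. w x'" and S=L and B=Cb, OF w]) (rule wb[OF _ x'])
        then show "w x' \<le> U x' + 0" using U[of x'] by simp
      qed
      finally show "w x \<le> ctrans' Y c (ctrans X c U) x" by simp
    qed
    ultimately show "ctrans' Y c (ctrans X c U) x = U x" by simp
  qed
  then show ?thesis using Ub unfolding U_def by blast
qed

lemma final: "(\<forall>t\<ge>0. c_convex X Y c (u_lim X c \<mu> \<nu> u0 t)) \<and>
         (\<exists>C. \<forall>t\<ge>0. \<forall>x\<in>X. \<bar>u_lim X c \<mu> \<nu> u0 t x\<bar> \<le> C)"
  using u_lim_props by blast

end

theorem proposition6p1: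
  fixes X :: "'a::euclidean_space set" and Y :: "'b::euclidean_space set"
    and \<mu> :: "'a measure" and \<nu> :: "'b measure"
    and c :: "'a \<times> 'b \<Rightarrow> real" and u0 :: "'a \<Rightarrow> real"
  assumes "compact X" and "smooth_manifold TYPE('n::finite) X"
    and "compact Y" and "smooth_manifold TYPE('n) Y"
    and "prob_space \<mu>" and "volume_form TYPE('n) X \<mu>"
    and "prob_space \<nu>" and "volume_form TYPE('n) Y \<nu>"
    and "continuous_on (X \<times> Y) c"
    and "closed (sing TYPE('n) X Y c)"
    and "cond_A1 TYPE('n) X Y c" and "cond_A2 TYPE('n) X Y c"
    and "c_convex X Y c u0"
  shows "(\<forall>t\<ge>0. c_convex X Y c (u_lim X c \<mu> \<nu> u0 t)) \<and>
         (\<exists>C. \<forall>t\<ge>0. \<forall>x\<in>X. \<bar>u_lim X c \<mu> \<nu> u0 t x\<bar> \<le> C)"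
proof -
  have sX: "sets \<mu> = sets (restrict_space borel X)" using assms(6) unfolding volume_form_def by blast
  have sY: "sets \<nu> = sets (restrict_space borel Y)" using assms(8) unfolding volume_form_def by blast
  have S: "sk_setting X Y \<mu> \<nu> c"
    by (rule sk_setting.intro) (fact assms(1), fact assms(3), fact assms(5), fact assms(7), fact sX, fact sY, fact assms(9))
  have Yne: "Y \<noteq> {}" by (rule sk_setting.Yne[OF S])
  have P: "sk_pos X Y \<mu> \<nu> c"
  proof (rule sk_pos.intro[OF S], rule sk_pos_axioms.intro)
    fix r :: real assume "r > 0"
    then show "\<exists>p>0. \<forall>y\<in>Y. p \<le> measure \<nu> (ball y r \<inter> Y)"
      by (rule manifold_pos[OF assms(3) assms(4) assms(8) assms(7) Yne])
  qed
  have M: "sk_main X Y \<mu> \<nu> c u0"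
    by (rule sk_main.intro[OF P], rule sk_main_axioms.intro, rule assms(13))
  show ?thesis by (rule sk_main.final[OF M])
qed


end
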